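(* Suppose the setting below holds, all local functions $f_i$ ($i=1,\dots,m$) are convex, the step sizes are $\gamma_k=\frac{2}{k+1}$, and the sample sizes satisfy Sampling Rule 1 for some epoch length $q\in\mathbb{Z}^+$. Let $x^*$ be an optimal solution of $\min_{x\in\Omega}F(x)$. Then $\mathbb{E}[F(\bar x^k)]-F(x^* )=\mathcal{O}(1/k)$.
   Context: Setting. Problem: minimize $F(x)=\frac1m\sum_{i=1}^m f_i(x)$ over $x\in\Omega\subset\mathbb{R}^d$, where $f_i(x)=\frac1{n_i}\sum_{j=1}^{n_i} f_{i,j}(x)$. Assumption 1: $\Omega$ is nonempty, convex and compact with diameter $\bar\rho=\max_{x,\hat x\in\Omega}\|x-\hat x\|$. Standing regularity: each $f_{i,j}$ is differentiable and $L$-smooth on a neighborhood of $\Omega$, each $f_i$ is $G$-Lipschitz on $\Omega$, and $\|\nabla f_i(x)\|\le C$ on $\Omega$. Assumption 2: connected undirected graph on $m$ agents; $W\in\mathbb{R}^{m\times m}$ symmetric, nonnegative, $W_{ij}=0$ unless $i=j$ or $\{i,j\}$ is an edge, doubly stochastic; $\lambda_2(W)$ denotes the largest modulus of eigenvalues of $W$ other than the simple eigenvalue $1$, and $|\lambda_2(W)|<1$. Algorithm DstoFW with step sizes $\gamma_k\in(0,1]$, epoch length $q\in\mathbb{Z}^+$ and sample sizes $|S^k|$: initialize $x_i^1\in\Omega$, $d_i^1=v_i^1=g_i^1=\nabla f_i(x_i^1)$. For $k=1,2,\dots$ each agent $i$: $\overline{x_i^k}=\sum_{j=1}^m W_{ij}x_j^k$;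 $u_i^k\in\arg\min_{u\in\Omega}\langle u,d_i^k\rangle$; $x_i^{k+1}=(1-\gamma_k)\overline{x_i^k}+\gamma_k u_i^k$; if $(k+1)\bmod q=0$ then $v_i^{k+1}=\frac1{n_i}\sum_{j=1}^{n_i}\nabla f_{i,j}(x_i^{k+1})$, else draw a sample set $S^k$ from $[n_i]$ uniformly at random (independently of the past) and set $v_i^{k+1}=\frac1{|S^k|}\sum_{j\in S^k}[\nabla f_{i,j}(x_i^{k+1})-\nabla f_{i,j}(x_i^k)]+v_i^k$; $g_i^{k+1}=d_i^k+v_i^{k+1}-v_i^k$; $d_i^{k+1}=\sum_{j=1}^m W_{ij}g_j^{k+1}$. Notation: $\bar x^k=\frac1m\sum_ix_i^k$; expectations are over the random sampling. Sampling Rule 1: for every $\tilde n\in\mathbb{Z}^+$, $\sqrt{|S^{\tilde nq-1}|}=q$, and for every integer $k$ with $(\tilde n-1)q+1\le k<\tilde nq-1$, $\sqrt{1/|S^k|}\,\gamma_k\le\sqrt{1/|S^{k+1}|}\,\gamma_{k+1}$. *)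

theory Defs
  imports "HOL-Analysis.Analysis" "HOL-Probability.Probability" "HOL-Library.Landau_Symbols"
begin

(* Agents are 0..m-1; the local samples of agent i are 0..n i - 1. *)

definition local_obj :: "(nat \<Rightarrow> nat \<Rightarrow> 'a \<Rightarrow> real) \<Rightarrow> (nat \<Rightarrow> nat) \<Rightarrow> nat \<Rightarrow> 'a \<Rightarrow> real" where
  "local_obj fij n i x = (1 / real (n i)) * (\<Sum>j<n i. fij i j x)"

definition global_obj :: "nat \<Rightarrow> (nat \<Rightarrow> nat \<Rightarrow> 'a \<Rightarrow> real) \<Rightarrow> (nat \<Rightarrow> nat) \<Rightarrow> 'a \<Rightarrow> real" where
  "global_obj m fij n x = (1 / real m) * (\<Sum>i<m. local_obj fij n i x)"

definition local_grad :: "(nat \<Rightarrow> nat \<Rightarrow> 'a \<Rightarrow> 'a::real_vector) \<Rightarrow> (nat \<Rightarrow> nat) \<Rightarrow> nat \<Rightarrow> 'a \<Rightarrow> 'a" where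
  "local_grad gr n i x = (1 / real (n i)) *\<^sub>R (\<Sum>j<n i. gr i j x)"

definition connected_graph :: "nat \<Rightarrow> (nat \<Rightarrow> nat \<Rightarrow> bool) \<Rightarrow> bool" where
  "connected_graph m E \<longleftrightarrow>
     (\<forall>i j. E i j \<longrightarrow> i < m \<and> j < m \<and> i \<noteq> j \<and> E j i) \<and>
     (\<forall>i<m. \<forall>j<m. E\<^sup>*\<^sup>* i j)"

definition mat_eigenpair :: "nat \<Rightarrow> (nat \<Rightarrow> nat \<Rightarrow> real) \<Rightarrow> real \<Rightarrow> (nat \<Rightarrow> real) \<Rightarrow> bool" where
  "mat_eigenpair m W lam v \<longleftrightarrow>
     (\<exists>i<m. v i \<noteq> 0) \<and> (\<forall>i<m. (\<Sum>j<m. W i j * v j) = lam * v i)"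

definition mixing_matrix :: "nat \<Rightarrow> (nat \<Rightarrow> nat \<Rightarrow> bool) \<Rightarrow> (nat \<Rightarrow> nat \<Rightarrow> real) \<Rightarrow> bool" where
  "mixing_matrix m E W \<longleftrightarrow>
     (\<forall>i<m. \<forall>j<m. W i j = W j i) \<and>
     (\<forall>i<m. \<forall>j<m. 0 \<le> W i j) \<and>
     (\<forall>i<m. \<forall>j<m. W i j \<noteq> 0 \<longrightarrow> i = j \<or> E i j) \<and>
     (\<forall>i<m. (\<Sum>j<m. W i j) = 1) \<and>
     (\<forall>j<m. (\<Sum>i<m. W i j) = 1) \<and>
     \<comment> \<open>1 is a simple eigenvalue\<close>
     (\<forall>v. mat_eigenpair m W 1 v \<longrightarrow> (\<exists>c. \<forall>i<m. v i = c)) \<and>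
     \<comment> \<open>all other eigenvalues have modulus < 1, i.e. |lambda_2(W)| < 1\<close>
     (\<forall>lam v. mat_eigenpair m W lam v \<and> lam \<noteq> 1 \<longrightarrow> \<bar>lam\<bar> < 1)"

(* Sampling Rule 1; s k = |S^k| *)
definition sampling_rule1 :: "nat \<Rightarrow> (nat \<Rightarrow> real) \<Rightarrow> (nat \<Rightarrow> nat) \<Rightarrow> bool" where
  "sampling_rule1 q \<gamma> s \<longleftrightarrow>
     (\<forall>N::nat. N \<ge> 1 \<longrightarrow>
        sqrt (real (s (N * q - 1))) = real q \<and>
        (\<forall>k. (N - 1) * q + 1 \<le> k \<and> k < N * q - 1 \<longrightarrow>
           sqrt (1 / real (s k)) * \<gamma> k \<le> sqrt (1 / real (s (Suc k))) * \<gamma> (Suc k)))"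

(* The DstoFW iteration. dstofw ... t is the state (x^k, v^k, d^k) at iteration k = t+1.
   \<omega> (k, i, l), l < s k, is the l-th index of the sample S^k drawn by agent i.
   lmo k i d is the linear-minimization output u_i^k for direction d. *)
primrec dstofw :: "nat \<Rightarrow> (nat \<Rightarrow> nat \<Rightarrow> real) \<Rightarrow> (nat \<Rightarrow> nat) \<Rightarrow> (nat \<Rightarrow> nat \<Rightarrow> 'a \<Rightarrow> 'a)
   \<Rightarrow> (nat \<Rightarrow> nat \<Rightarrow> 'a \<Rightarrow> 'a) \<Rightarrow> (nat \<Rightarrow> real) \<Rightarrow> nat \<Rightarrow> (nat \<Rightarrow> nat)
   \<Rightarrow> (nat \<times> nat \<times> nat \<Rightarrow> nat) \<Rightarrow> (nat \<Rightarrow> 'a::real_inner) \<Rightarrow> nat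
   \<Rightarrow> (nat \<Rightarrow> 'a) \<times> (nat \<Rightarrow> 'a) \<times> (nat \<Rightarrow> 'a)" where
  "dstofw m W n gr lmo \<gamma> q s \<omega> x1 0 =
     (x1, (\<lambda>i. local_grad gr n i (x1 i)), (\<lambda>i. local_grad gr n i (x1 i)))"
| "dstofw m W n gr lmo \<gamma> q s \<omega> x1 (Suc t) =
     (case dstofw m W n gr lmo \<gamma> q s \<omega> x1 t of (x, v, d) \<Rightarrow>
       let k = Suc t;
           xbar = (\<lambda>i. \<Sum>j<m. W i j *\<^sub>R x j);
           u = (\<lambda>i. lmo k i (d i));
           x' = (\<lambda>i. (1 - \<gamma> k) *\<^sub>R xbar i + \<gamma> k *\<^sub>R u i);
           v' = (\<lambda>i. if (k + 1) mod q = 0 then local_grad gr n i (x' i)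
                     else (1 / real (s k)) *\<^sub>R
                            (\<Sum>l<s k. gr i (\<omega> (k, i, l)) (x' i) - gr i (\<omega> (k, i, l)) (x i))
                          + v i);
           g' = (\<lambda>i. d i + v' i - v i);
           d' = (\<lambda>i. \<Sum>j<m. W i j *\<^sub>R g' j)
       in (x', v', d'))"

(* x^k_i for k >= 1 *)
definition dstofw_x :: "nat \<Rightarrow> (nat \<Rightarrow> nat \<Rightarrow> real) \<Rightarrow> (nat \<Rightarrow> nat) \<Rightarrow> (nat \<Rightarrow> nat \<Rightarrow> 'a \<Rightarrow> 'a)
   \<Rightarrow> (nat \<Rightarrow> nat \<Rightarrow> 'a \<Rightarrow> 'a) \<Rightarrow> (nat \<Rightarrow> real) \<Rightarrow> nat \<Rightarrow> (nat \<Rightarrow> nat)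
   \<Rightarrow> (nat \<times> nat \<times> nat \<Rightarrow> nat) \<Rightarrow> (nat \<Rightarrow> 'a::real_inner) \<Rightarrow> nat \<Rightarrow> nat \<Rightarrow> 'a" where
  "dstofw_x m W n gr lmo \<gamma> q s \<omega> x1 k = fst (dstofw m W n gr lmo \<gamma> q s \<omega> x1 (k - 1))"

definition dstofw_xbar :: "nat \<Rightarrow> (nat \<Rightarrow> nat \<Rightarrow> real) \<Rightarrow> (nat \<Rightarrow> nat) \<Rightarrow> (nat \<Rightarrow> nat \<Rightarrow> 'a \<Rightarrow> 'a)
   \<Rightarrow> (nat \<Rightarrow> nat \<Rightarrow> 'a \<Rightarrow> 'a) \<Rightarrow> (nat \<Rightarrow> real) \<Rightarrow> nat \<Rightarrow> (nat \<Rightarrow> nat)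
   \<Rightarrow> (nat \<times> nat \<times> nat \<Rightarrow> nat) \<Rightarrow> (nat \<Rightarrow> 'a::real_inner) \<Rightarrow> nat \<Rightarrow> 'a" where
  "dstofw_xbar m W n gr lmo \<gamma> q s \<omega> x1 k =
     (1 / real m) *\<^sub>R (\<Sum>i<m. dstofw_x m W n gr lmo \<gamma> q s \<omega> x1 k i)"

(* Joint law of all samples S^t (t < K) of all agents: every index is drawn
   independently and uniformly from [n_i] (sampling with replacement). *)
definition sample_pmf :: "nat \<Rightarrow> (nat \<Rightarrow> nat) \<Rightarrow> (nat \<Rightarrow> nat) \<Rightarrow> nat \<Rightarrow> (nat \<times> nat \<times> nat \<Rightarrow> nat) pmf" where
  "sample_pmf m n s K =
     Pi_pmf {(t, i, l). t < K \<and> i < m \<and> l < s t} 0 (\<lambda>(t, i, l). pmf_of_set {..<n i})"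

end

theory Submission
  imports Defs
begin

lemma mix_identity:
  fixes W :: "nat \<Rightarrow> nat \<Rightarrow> real" and z :: "nat \<Rightarrow> real"
  assumes rows: "\<forall>i<m. (\<Sum>j<m. W i j) = 1" and cols: "\<forall>j<m. (\<Sum>i<m. W i j) = 1"
  shows "(\<Sum>i<m. (z i)\<^sup>2) - (\<Sum>i<m. (\<Sum>j<m. W i j * z j)\<^sup>2)
         = (\<Sum>i<m. \<Sum>j<m. W i j * (z j - (\<Sum>k<m. W i k * z k))\<^sup>2)"
proof -
  define y where "y i = (\<Sum>k<m. W i k * z k)" for i
  have row: "(\<Sum>j<m. W i j * (z j - y i)\<^sup>2) = (\<Sum>j<m. W i j * (z j)\<^sup>2) - (y i)\<^sup>2"
    if "i < m" for i
  proof -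
    have "(\<Sum>j<m. W i j * (z j - y i)\<^sup>2)
        = (\<Sum>j<m. W i j * (z j)\<^sup>2) - 2 * y i * (\<Sum>j<m. W i j * z j) + (y i)\<^sup>2 * (\<Sum>j<m. W i j)"
    proof -
      have "\<And>j. W i j * (z j - y i)\<^sup>2 = W i j * (z j)\<^sup>2 - 2 * y i * (W i j * z j) + (y i)\<^sup>2 * W i j"
        by (simp add: power2_eq_square algebra_simps)
      hence "(\<Sum>j<m. W i j * (z j - y i)\<^sup>2) = (\<Sum>j<m. W i j * (z j)\<^sup>2 - 2 * y i * (W i j * z j) + (y i)\<^sup>2 * W i j)"
        by simp
      also have "\<dots> = (\<Sum>j<m. W i j * (z j)\<^sup>2) - (\<Sum>j<m. 2 * y i * (W i j * z j)) + (\<Sum>j<m. (y i)\<^sup>2 * W i j)"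
        by (simp add: sum.distrib sum_subtractf)
      finally show ?thesis by (simp add: sum_distrib_left)
    qed
    also have "\<dots> = (\<Sum>j<m. W i j * (z j)\<^sup>2) - (y i)\<^sup>2"
      using rows that by (simp add: y_def[symmetric] power2_eq_square)
    finally show ?thesis .
  qed
  have "(\<Sum>i<m. \<Sum>j<m. W i j * (z j - y i)\<^sup>2) = (\<Sum>i<m. \<Sum>j<m. W i j * (z j)\<^sup>2) - (\<Sum>i<m. (y i)\<^sup>2)"
    using row by (simp add: sum_subtractf)
  also have "(\<Sum>i<m. \<Sum>j<m. W i j * (z j)\<^sup>2) = (\<Sum>j<m. (\<Sum>i<m. W i j) * (z j)\<^sup>2)"
    by (subst sum.swap) (simp add: sum_distrib_right)
  also have "\<dots> = (\<Sum>j<m. (z j)\<^sup>2)" using cols by simp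
  finally show ?thesis by (simp add: y_def)
qed

lemma mix_strict:
  fixes W :: "nat \<Rightarrow> nat \<Rightarrow> real" and z :: "nat \<Rightarrow> real"
  assumes W: "mixing_matrix m E W"
    and sum0: "(\<Sum>i<m. z i) = 0" and nz: "\<exists>i<m. z i \<noteq> 0"
  shows "(\<Sum>i<m. (\<Sum>j<m. W i j * z j)\<^sup>2) < (\<Sum>i<m. (z i)\<^sup>2)"
proof (rule ccontr)
  note Wd = W[unfolded mixing_matrix_def]
  note c2 = conjunct2
  have sym: "\<forall>i<m. \<forall>j<m. W i j = W j i" using Wd by (rule conjunct1)
  have nn: "\<forall>i<m. \<forall>j<m. 0 \<le> W i j" using Wd[THEN c2] by (rule conjunct1)
  have rows: "\<forall>i<m. (\<Sum>j<m. W i j) = 1" using Wd[THEN c2, THEN c2, THEN c2] by (rule conjunct1)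
  have cols: "\<forall>j<m. (\<Sum>i<m. W i j) = 1" using Wd[THEN c2, THEN c2, THEN c2, THEN c2] by (rule conjunct1)
  have e1: "\<forall>v. mat_eigenpair m W 1 v \<longrightarrow> (\<exists>c. \<forall>i<m. v i = c)"
    using Wd[THEN c2, THEN c2, THEN c2, THEN c2, THEN c2] by (rule conjunct1)
  have e2: "\<forall>lam v. mat_eigenpair m W lam v \<and> lam \<noteq> 1 \<longrightarrow> \<bar>lam\<bar> < 1"
    using Wd[THEN c2, THEN c2, THEN c2, THEN c2, THEN c2] by (rule conjunct2)
  define y where "y i = (\<Sum>k<m. W i k * z k)" for i
  assume "\<not> ?thesis"
  hence A: "(\<Sum>i<m. (z i)\<^sup>2) - (\<Sum>i<m. (y i)\<^sup>2) \<le> 0" unfolding y_def by linarith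
  have B: "(\<Sum>i<m. (z i)\<^sup>2) - (\<Sum>i<m. (y i)\<^sup>2) = (\<Sum>i<m. \<Sum>j<m. W i j * (z j - y i)\<^sup>2)"
    unfolding y_def by (rule mix_identity[OF rows cols])
  have nonneg: "0 \<le> W i j * (z j - y i)\<^sup>2" if "i < m" "j < m" for i j
    using nn that by simp
  have rowsum_nn: "0 \<le> (\<Sum>j<m. W i j * (z j - y i)\<^sup>2)" if "i < m" for i
    by (rule sum_nonneg) (use nonneg that in simp)
  have tot0: "(\<Sum>i<m. \<Sum>j<m. W i j * (z j - y i)\<^sup>2) = 0"
  proof -
    have "0 \<le> (\<Sum>i<m. \<Sum>j<m. W i j * (z j - y i)\<^sup>2)"
      by (rule sum_nonneg) (use rowsum_nn in simp)
    thus ?thesis using A B by linarith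
  qed
  have row0: "(\<Sum>j<m. W i j * (z j - y i)\<^sup>2) = 0" if "i < m" for i
  proof -
    have "\<forall>i\<in>{..<m}. (\<Sum>j<m. W i j * (z j - y i)\<^sup>2) = 0"
      using sum_nonneg_eq_0_iff[of "{..<m}" "\<lambda>i. \<Sum>j<m. W i j * (z j - y i)\<^sup>2"] tot0 rowsum_nn
      by simp
    thus ?thesis using that by simp
  qed
  have zero: "W i j * (z j - y i)\<^sup>2 = 0" if "i < m" "j < m" for i j
  proof -
    have "\<forall>j\<in>{..<m}. W i j * (z j - y i)\<^sup>2 = 0"
      using sum_nonneg_eq_0_iff[of "{..<m}" "\<lambda>j. W i j * (z j - y i)\<^sup>2"] row0[OF that(1)]
        nonneg[OF that(1)] by simp
    thus ?thesis using that by simp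
  qed
  have wz: "W i j * z j = W i j * y i" if "i < m" "j < m" for i j
    using zero[OF that] by (auto simp: power2_eq_square)
  have Wy: "(\<Sum>i<m. W j i * y i) = z j" if "j < m" for j
  proof -
    have "(\<Sum>i<m. W j i * y i) = (\<Sum>i<m. W i j * y i)" by (intro sum.cong refl) (metis lessThan_iff sym that)
    also have "\<dots> = (\<Sum>i<m. W i j * z j)" by (intro sum.cong refl) (metis lessThan_iff wz that)
    also have "\<dots> = (\<Sum>i<m. W i j) * z j" by (simp add: sum_distrib_right)
    also have "\<dots> = z j" using cols that by simp
    finally show ?thesis .
  qed
  have zy: "\<forall>i<m. z i = y i"
  proof (rule ccontr)
    assume "\<not> (\<forall>i<m. z i = y i)"
    then obtain i where i: "i < m" "z i - y i \<noteq> 0" by auto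
    have "(\<Sum>j<m. W k j * (z j - y j)) = - 1 * (z k - y k)" if "k < m" for k
    proof -
      have "(\<Sum>j<m. W k j * (z j - y j)) = (\<Sum>j<m. W k j * z j) - (\<Sum>j<m. W k j * y j)"
        by (simp add: right_diff_distrib sum_subtractf)
      also have "\<dots> = y k - z k" using Wy[OF that] by (simp add: y_def)
      finally show ?thesis by simp
    qed
    hence "mat_eigenpair m W (-1) (\<lambda>i. z i - y i)"
      unfolding mat_eigenpair_def using i by blast
    thus False using e2 by force
  qed
  have "\<forall>i<m. (\<Sum>j<m. W i j * z j) = 1 * z i" using zy by (simp add: y_def)
  hence "mat_eigenpair m W 1 z" using nz unfolding mat_eigenpair_def by blast
  then obtain c where c: "\<forall>i<m. z i = c" using e1 by blast
  have "m > 0" using nz by auto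
  have "(\<Sum>i<m. z i) = (\<Sum>i<m. c)" using c by simp
  hence "real m * c = 0" using sum0 by simp
  hence "c = 0" using \<open>m > 0\<close> by simp
  thus False using nz c by auto
qed

lemma contraction_real:
  fixes W :: "nat \<Rightarrow> nat \<Rightarrow> real"
  assumes W: "mixing_matrix m E W"
  shows "\<exists>\<mu>. 0 \<le> \<mu> \<and> \<mu> < 1 \<and> (\<forall>z. (\<Sum>i<m. z i) = 0 \<longrightarrow>
           (\<Sum>i<m. (\<Sum>j<m. W i j * z j)\<^sup>2) \<le> \<mu> * (\<Sum>i<m. (z i)\<^sup>2))"
proof -
  define X where "X = product_topology (\<lambda>_. euclideanreal) {..<m}"
  define Q where "Q z = (\<Sum>i<m. (\<Sum>j<m. W i j * z j)\<^sup>2)" for z :: "nat \<Rightarrow> real"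
  define C where "C = {z \<in> topspace X. (\<Sum>i<m. z i) \<in> {0}} \<inter> {z \<in> topspace X. (\<Sum>i<m. (z i)\<^sup>2) \<in> {1}}"
  define K where "K = PiE {..<m} (\<lambda>_. {-1..1::real})"
  have proj: "continuous_map X euclideanreal (\<lambda>z. z i)" if "i < m" for i
    unfolding X_def using that by (intro continuous_map_product_projection) auto
  have cQ: "continuous_map X euclideanreal Q"
    unfolding Q_def by (intro continuous_map_sum continuous_map_real_pow continuous_map_real_mult
        continuous_map_canonical_const proj finite_lessThan) auto
  have c1: "continuous_map X euclideanreal (\<lambda>z. \<Sum>i<m. z i)"
    by (intro continuous_map_sum proj finite_lessThan) auto
  have c2: "continuous_map X euclideanreal (\<lambda>z. \<Sum>i<m. (z i)\<^sup>2)"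
    by (intro continuous_map_sum continuous_map_real_pow proj finite_lessThan) auto
  have closedC: "closedin X C"
    unfolding C_def
    by (intro closedin_Int closedin_continuous_map_preimage[OF c1]
        closedin_continuous_map_preimage[OF c2]) (auto simp: closed_closedin[symmetric])
  have compK: "compactin X K"
    unfolding X_def K_def by (subst compactin_PiE) auto
  have CK: "C \<subseteq> K"
  proof
    fix z assume z: "z \<in> C"
    have top: "z \<in> PiE {..<m} (\<lambda>_. UNIV)" using z unfolding C_def X_def by auto
    have s1: "(\<Sum>i<m. (z i)\<^sup>2) = 1" using z unfolding C_def by auto
    have "z i \<in> {-1..1}" if "i < m" for i
    proof -
      have "(z i)\<^sup>2 \<le> (\<Sum>i<m. (z i)\<^sup>2)"
        by (rule member_le_sum) (use that in auto)
      hence "(z i)\<^sup>2 \<le> 1" using s1 by simp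
      hence "\<bar>z i\<bar> \<le> 1" by (simp add: abs_square_le_1)
      thus ?thesis by auto
    qed
    thus "z \<in> K" using top unfolding K_def by (auto simp: PiE_iff)
  qed
  have compC: "compactin X C" by (rule closed_compactin[OF compK CK closedC])
  have compQ: "compact (Q ` C)"
    using image_compactin[OF compC cQ] by simp
  have norm_step: "restrict (\<lambda>i. z i / sqrt (\<Sum>i<m. (z i)\<^sup>2)) {..<m} \<in> C \<and>
      Q z = (\<Sum>i<m. (z i)\<^sup>2) * Q (restrict (\<lambda>i. z i / sqrt (\<Sum>i<m. (z i)\<^sup>2)) {..<m})"
    if z0: "(\<Sum>i<m. z i) = 0" and nz: "\<exists>i<m. z i \<noteq> 0" for z
  proof -
    define S where "S = (\<Sum>i<m. (z i)\<^sup>2)"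
    define r where "r = sqrt S"
    define z' where "z' = restrict (\<lambda>i. z i / r) {..<m}"
    obtain i0 where i0: "i0 < m" "z i0 \<noteq> 0" using nz by auto
    have "0 < (z i0)\<^sup>2" using i0 by simp
    also have "(z i0)\<^sup>2 \<le> S" unfolding S_def by (rule member_le_sum) (use i0 in auto)
    finally have Spos: "S > 0" .
    hence rpos: "r > 0" unfolding r_def by simp
    have r2: "r\<^sup>2 = S" unfolding r_def using Spos by simp
    have z'i: "z' i = z i / r" if "i < m" for i using that unfolding z'_def by simp
    have sz': "(\<Sum>i<m. z' i) = 0"
    proof -
      have "(\<Sum>i<m. z' i) = (\<Sum>i<m. z i / r)" by (rule sum.cong) (auto simp: z'i)
      also have "\<dots> = 0" using z0 by (simp add: sum_divide_distrib[symmetric])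
      finally show ?thesis .
    qed
    have sq': "(\<Sum>i<m. (z' i)\<^sup>2) = 1"
    proof -
      have "(\<Sum>i<m. (z' i)\<^sup>2) = (\<Sum>i<m. (z i)\<^sup>2 / r\<^sup>2)"
        by (rule sum.cong) (auto simp: z'i power_divide)
      also have "\<dots> = S / r\<^sup>2" unfolding S_def by (simp add: sum_divide_distrib[symmetric])
      also have "\<dots> = 1" using r2 Spos by simp
      finally show ?thesis .
    qed
    have top': "z' \<in> topspace X" unfolding X_def z'_def by (auto simp: PiE_iff)
    have inC: "z' \<in> C" unfolding C_def using top' sz' sq' by auto
    have Qz': "Q z' = Q z / r\<^sup>2"
    proof -
      have inner: "(\<Sum>j<m. W i j * z' j) = (\<Sum>j<m. W i j * z j) / r" for i
      proof -
        have "(\<Sum>j<m. W i j * z' j) = (\<Sum>j<m. W i j * z j / r)"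
          by (rule sum.cong) (auto simp: z'i)
        thus ?thesis by (simp add: sum_divide_distrib[symmetric])
      qed
      have "Q z' = (\<Sum>i<m. (\<Sum>j<m. W i j * z j)\<^sup>2 / r\<^sup>2)"
        unfolding Q_def inner by (simp add: power_divide)
      also have "\<dots> = Q z / r\<^sup>2" unfolding Q_def by (simp add: sum_divide_distrib[symmetric])
      finally show ?thesis .
    qed
    have "Q z = S * Q z'" using Qz' r2 Spos by simp
    thus ?thesis using inC unfolding z'_def r_def S_def by simp
  qed
  have zero_case: "Q z = 0" if "\<forall>i<m. z i = 0" for z
  proof -
    have "(\<Sum>j<m. W i j * z j) = 0" for i using that by simp
    thus ?thesis unfolding Q_def by simp
  qed
  show ?thesis
  proof (cases "C = {}")
    case True
    show ?thesis
    proof (intro exI[of _ 0] conjI allI impI)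
      fix z :: "nat \<Rightarrow> real" assume z0: "(\<Sum>i<m. z i) = 0"
      have "\<forall>i<m. z i = 0" using norm_step[OF z0] True by blast
      thus "(\<Sum>i<m. (\<Sum>j<m. W i j * z j)\<^sup>2) \<le> 0 * (\<Sum>i<m. (z i)\<^sup>2)"
        using zero_case unfolding Q_def by simp
    qed auto
  next
    case False
    then obtain s where s: "s \<in> Q ` C" "\<forall>t\<in>Q ` C. t \<le> s"
      using compact_attains_sup[OF compQ] by blast
    then obtain z1 where z1: "z1 \<in> C" "s = Q z1" by auto
    have z1s: "(\<Sum>i<m. z1 i) = 0" "(\<Sum>i<m. (z1 i)\<^sup>2) = 1" using z1 unfolding C_def by auto
    have "\<exists>i<m. z1 i \<noteq> 0"
    proof (rule ccontr)
      assume "\<not> ?thesis"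
      hence "(\<Sum>i<m. (z1 i)\<^sup>2) = 0" by simp
      thus False using z1s by simp
    qed
    hence "Q z1 < 1" using mix_strict[OF W z1s(1)] z1s(2) unfolding Q_def by simp
    hence s1: "s < 1" using z1 by simp
    show ?thesis
    proof (intro exI[of _ "max 0 s"] conjI allI impI)
      fix z :: "nat \<Rightarrow> real" assume z0: "(\<Sum>i<m. z i) = 0"
      have Sge: "0 \<le> (\<Sum>i<m. (z i)\<^sup>2)" by (rule sum_nonneg) simp
      show "(\<Sum>i<m. (\<Sum>j<m. W i j * z j)\<^sup>2) \<le> max 0 s * (\<Sum>i<m. (z i)\<^sup>2)"
      proof (cases "\<exists>i<m. z i \<noteq> 0")
        case True
        note ns = norm_step[OF z0 True]
        have "Q (restrict (\<lambda>i. z i / sqrt (\<Sum>i<m. (z i)\<^sup>2)) {..<m}) \<le> s"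
          using ns s(2) by blast
        hence "Q z \<le> (\<Sum>i<m. (z i)\<^sup>2) * s" using ns Sge by (simp add: mult_left_mono)
        also have "\<dots> \<le> max 0 s * (\<Sum>i<m. (z i)\<^sup>2)" using Sge by (simp add: mult_right_mono mult.commute)
        finally show ?thesis unfolding Q_def .
      next
        case False
        hence "Q z = 0" using zero_case by blast
        thus ?thesis using Sge unfolding Q_def by simp
      qed
    qed (use s1 in auto)
  qed
qed

definition nrm :: "nat \<Rightarrow> (nat \<Rightarrow> 'a::real_normed_vector) \<Rightarrow> real" where
  "nrm m z = L2_set (\<lambda>i. norm (z i)) {..<m}"
definition mixv :: "nat \<Rightarrow> (nat \<Rightarrow> nat \<Rightarrow> real) \<Rightarrow> (nat \<Rightarrow> 'a::real_vector) \<Rightarrow> nat \<Rightarrow> 'a" where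
  "mixv m W z = (\<lambda>i. \<Sum>j<m. W i j *\<^sub>R z j)"
definition avgv :: "nat \<Rightarrow> (nat \<Rightarrow> 'a::real_vector) \<Rightarrow> 'a" where
  "avgv m z = (1 / real m) *\<^sub>R (\<Sum>i<m. z i)"
definition dev :: "nat \<Rightarrow> (nat \<Rightarrow> 'a::real_vector) \<Rightarrow> nat \<Rightarrow> 'a" where
  "dev m z = (\<lambda>i. z i - avgv m z)"

lemma nrm_nonneg: "0 \<le> nrm m z" by (simp add: nrm_def)

lemma nrm_triangle: "nrm m (\<lambda>i. z i + w i) \<le> nrm m z + nrm m w"
proof -
  have "nrm m (\<lambda>i. z i + w i) \<le> L2_set (\<lambda>i. norm (z i) + norm (w i)) {..<m}"
    unfolding nrm_def by (rule L2_set_mono) (auto simp: norm_triangle_ineq)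
  also have "\<dots> \<le> nrm m z + nrm m w" unfolding nrm_def by (rule L2_set_triangle_ineq)
  finally show ?thesis .
qed

lemma nrm_diff: "nrm m (\<lambda>i. z i - w i) \<le> nrm m z + nrm m w"
proof -
  have "nrm m (\<lambda>i. z i - w i) \<le> L2_set (\<lambda>i. norm (z i) + norm (w i)) {..<m}"
    unfolding nrm_def by (rule L2_set_mono) (auto simp: norm_triangle_ineq4)
  also have "\<dots> \<le> nrm m z + nrm m w" unfolding nrm_def by (rule L2_set_triangle_ineq)
  finally show ?thesis .
qed

lemma nrm_scale: "nrm m (\<lambda>i. c *\<^sub>R z i) = \<bar>c\<bar> * nrm m z"
  unfolding nrm_def by (simp add: L2_set_right_distrib)

lemma nrm_component: "i < m \<Longrightarrow> norm (z i) \<le> nrm m z"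
  unfolding nrm_def by (rule member_le_L2_set) auto

lemma nrm_bound: assumes "\<forall>i<m. norm (z i) \<le> B" shows "nrm m z \<le> sqrt (real m) * B"
proof -
  have "nrm m z \<le> L2_set (\<lambda>i. B) {..<m}"
    unfolding nrm_def by (rule L2_set_mono) (use assms in auto)
  also have "\<dots> = sqrt (real m) * \<bar>B\<bar>" by (simp add: L2_set_constant)
  also have "\<dots> = sqrt (real m) * B"
  proof (cases "m = 0")
    case False
    then have "0 \<le> B" using assms[rule_format, of 0] norm_ge_zero[of "z 0"] by linarith
    thus ?thesis by simp
  qed simp
  finally show ?thesis .
qed

lemma sum_mixv: assumes cols: "\<forall>j<m. (\<Sum>i<m. W i j) = 1"
  shows "(\<Sum>i<m. mixv m W z i) = (\<Sum>j<m. z j)"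
proof -
  have "(\<Sum>i<m. mixv m W z i) = (\<Sum>j<m. (\<Sum>i<m. W i j) *\<^sub>R z j)"
    unfolding mixv_def by (subst sum.swap) (simp add: scaleR_sum_left)
  also have "\<dots> = (\<Sum>j<m. z j)" using cols by simp
  finally show ?thesis .
qed

lemma avgv_mixv: "\<forall>j<m. (\<Sum>i<m. W i j) = 1 \<Longrightarrow> avgv m (mixv m W z) = avgv m z"
  unfolding avgv_def by (simp add: sum_mixv)

lemma sum_dev: assumes "m \<ge> 1" shows "(\<Sum>i<m. dev m z i) = 0"
proof -
  have "(\<Sum>i<m. dev m z i) = (\<Sum>i<m. z i) - real m *\<^sub>R avgv m z"
    unfolding dev_def by (simp add: sum_subtractf sum_constant_scaleR)
  also have "\<dots> = 0" using assms unfolding avgv_def by simp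
  finally show ?thesis .
qed

lemma mixv_const: assumes "\<forall>i<m. (\<Sum>j<m. W i j) = 1" "i < m"
  shows "(\<Sum>j<m. W i j *\<^sub>R (c::'a::real_vector)) = c"
proof -
  have "(\<Sum>j<m. W i j *\<^sub>R c) = (\<Sum>j<m. W i j) *\<^sub>R c" by (simp add: scaleR_sum_left)
  thus ?thesis using assms by simp
qed

lemma mixv_dev: assumes rows: "\<forall>i<m. (\<Sum>j<m. W i j) = 1" and cols: "\<forall>j<m. (\<Sum>i<m. W i j) = 1"
  and "i < m"
  shows "mixv m W (dev m z) i = dev m (mixv m W z) i"
proof -
  have "mixv m W (dev m z) i = mixv m W z i - (\<Sum>j<m. W i j *\<^sub>R avgv m z)"
    unfolding mixv_def dev_def by (simp add: scaleR_diff_right sum_subtractf)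
  also have "\<dots> = mixv m W z i - avgv m z" using mixv_const[OF rows \<open>i<m\<close>] by simp
  also have "\<dots> = dev m (mixv m W z) i" unfolding dev_def by (simp add: avgv_mixv[OF cols])
  finally show ?thesis .
qed

lemma nrm_dev_le: "nrm m (dev m z) \<le> nrm m (z :: nat \<Rightarrow> 'a::real_inner)"
proof -
  define a where "a = avgv m z"
  have "(\<Sum>i<m. (norm (z i - a))\<^sup>2) = (\<Sum>i<m. (norm (z i))\<^sup>2) - 2 * inner (\<Sum>i<m. z i) a + real m * (norm a)\<^sup>2"
    by (simp add: power2_norm_eq_inner inner_diff_left inner_diff_right sum_subtractf sum.distrib
        inner_sum_left inner_sum_right inner_commute sum_distrib_left)
  also have "(\<Sum>i<m. z i) = real m *\<^sub>R a"
  proof (cases "m = 0")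
    case False thus ?thesis unfolding a_def avgv_def by simp
  qed simp
  also have "2 * inner (real m *\<^sub>R a) a = 2 * real m * (norm a)\<^sup>2"
    by (simp add: power2_norm_eq_inner)
  finally have "(\<Sum>i<m. (norm (z i - a))\<^sup>2) = (\<Sum>i<m. (norm (z i))\<^sup>2) - real m * (norm a)\<^sup>2"
    by simp
  hence "(\<Sum>i<m. (norm (z i - a))\<^sup>2) \<le> (\<Sum>i<m. (norm (z i))\<^sup>2)" by simp
  thus ?thesis unfolding nrm_def L2_set_def dev_def a_def by simp
qed

lemma norm_sq_basis: "(norm (x::'a::euclidean_space))\<^sup>2 = (\<Sum>b\<in>Basis. (x \<bullet> b)\<^sup>2)"
  unfolding power2_norm_eq_inner by (subst euclidean_inner) (simp add: power2_eq_square)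

lemma contraction_vec:
  fixes W :: "nat \<Rightarrow> nat \<Rightarrow> real"
  assumes W: "mixing_matrix m E W"
  shows "\<exists>lam. 0 \<le> lam \<and> lam < 1 \<and> (\<forall>z::nat \<Rightarrow> 'a::euclidean_space. (\<Sum>i<m. z i) = 0 \<longrightarrow>
           nrm m (mixv m W z) \<le> lam * nrm m z)"
proof -
  obtain \<mu> where mu: "0 \<le> \<mu>" "\<mu> < 1"
    and c: "\<forall>z. (\<Sum>i<m. z i) = 0 \<longrightarrow> (\<Sum>i<m. (\<Sum>j<m. W i j * z j)\<^sup>2) \<le> \<mu> * (\<Sum>i<m. (z i)\<^sup>2)"
    using contraction_real[OF W] by blast
  show ?thesis
  proof (intro exI[of _ "sqrt \<mu>"] conjI allI impI)
    fix z :: "nat \<Rightarrow> 'a" assume z0: "(\<Sum>i<m. z i) = 0"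
    have coord: "(\<Sum>i<m. (\<Sum>j<m. W i j * (z j \<bullet> b))\<^sup>2) \<le> \<mu> * (\<Sum>i<m. (z i \<bullet> b)\<^sup>2)" for b
    proof -
      have "(\<Sum>i<m. z i \<bullet> b) = 0" using z0 by (simp add: inner_sum_left[symmetric])
      thus ?thesis using c by blast
    qed
    have mb: "mixv m W z i \<bullet> b = (\<Sum>j<m. W i j * (z j \<bullet> b))" for i b
      unfolding mixv_def by (simp add: inner_sum_left)
    have "(\<Sum>i<m. (norm (mixv m W z i))\<^sup>2) = (\<Sum>b\<in>Basis. \<Sum>i<m. (\<Sum>j<m. W i j * (z j \<bullet> b))\<^sup>2)"
      by (simp add: norm_sq_basis mb) (rule sum.swap)
    also have "\<dots> \<le> (\<Sum>b\<in>(Basis::'a set). \<mu> * (\<Sum>i<m. (z i \<bullet> b)\<^sup>2))"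
      by (rule sum_mono) (rule coord)
    also have "\<dots> = \<mu> * (\<Sum>b\<in>(Basis::'a set). \<Sum>i<m. (z i \<bullet> b)\<^sup>2)"
      by (simp add: sum_distrib_left)
    also have "(\<Sum>b\<in>(Basis::'a set). \<Sum>i<m. (z i \<bullet> b)\<^sup>2) = (\<Sum>i<m. (norm (z i))\<^sup>2)"
      by (simp add: norm_sq_basis) (rule sum.swap)
    finally have "sqrt (\<Sum>i<m. (norm (mixv m W z i))\<^sup>2) \<le> sqrt (\<mu> * (\<Sum>i<m. (norm (z i))\<^sup>2))"
      by (rule real_sqrt_le_mono)
    thus "nrm m (mixv m W z) \<le> sqrt \<mu> * nrm m z"
      unfolding nrm_def L2_set_def by (simp add: real_sqrt_mult)
  qed (use mu in auto)
qed

lemma lin_rec_bound: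
  fixes f :: "nat \<Rightarrow> real"
  assumes a: "0 \<le> a" "a < 1" and b: "0 \<le> b"
    and base: "f t0 \<le> B"
    and step: "\<And>t. t \<ge> t0 \<Longrightarrow> f (Suc t) \<le> a * f t + b"
  shows "\<forall>t\<ge>t0. f t \<le> max B (b / (1 - a))"
proof (intro allI impI)
  fix t assume "t0 \<le> t"
  thus "f t \<le> max B (b / (1 - a))"
  proof (induction t rule: dec_induct)
    case base thus ?case using assms by simp
  next
    case (step t)
    define M where "M = max B (b / (1 - a))"
    have "b \<le> (1 - a) * M"
    proof -
      have "b / (1 - a) \<le> M" unfolding M_def by simp
      thus ?thesis using a by (simp add: field_simps)
    qed
    have "f (Suc t) \<le> a * f t + b" using assms(5) step by blast
    also have "\<dots> \<le> a * M + b" using step a unfolding M_def by (simp add: mult_left_mono)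
    also have "\<dots> \<le> M" using \<open>b \<le> (1 - a) * M\<close> by (simp add: algebra_simps)
    finally show ?case unfolding M_def .
  qed
qed

lemma rec_geom:
  fixes lam c c0 :: real
  assumes lam: "0 \<le> lam" "lam < 1" and c: "0 \<le> c"
  shows "\<exists>K. \<forall>e::nat \<Rightarrow> real. (\<forall>t. 0 \<le> e t) \<longrightarrow> e 0 \<le> c0 \<longrightarrow>
     (\<forall>t. e (Suc t) \<le> lam * e t + c / (real t + 1)) \<longrightarrow> (\<forall>t. e t \<le> K / (real t + 1))"
proof -
  define M where "M = max c0 (c / (1 - lam))"
  define t0 where "t0 = nat \<lceil>3 / (1 - lam)\<rceil>"
  define a where "a = (1 + lam) / 2"
  define K where "K = max ((real t0 + 1) * M) (2 * c / (1 - a))"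
  have a01: "0 \<le> a" "a < 1" using lam unfolding a_def by auto
  have t0ge: "3 / (1 - lam) \<le> real t0" unfolding t0_def by linarith
  show ?thesis
  proof (intro exI[of _ K] allI impI)
    fix e :: "nat \<Rightarrow> real" and t :: nat
    assume e0: "\<forall>t. 0 \<le> e t" and ec0: "e 0 \<le> c0"
      and rec: "\<forall>t. e (Suc t) \<le> lam * e t + c / (real t + 1)"
    have bndM: "\<forall>t\<ge>0. e t \<le> max c0 (c / (1 - lam))"
    proof (rule lin_rec_bound[of lam c e 0 c0, OF lam c ec0])
      fix t
      have "c / (real t + 1) \<le> c / 1" using c by (intro divide_left_mono) auto
      hence "c / (real t + 1) \<le> c" by simp
      thus "e (Suc t) \<le> lam * e t + c" using rec by (meson add_left_mono order_trans)
    qed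
    hence bM: "e t \<le> M" for t unfolding M_def by simp
    define f where "f t = (real t + 1) * e t" for t
    have fstep: "f (Suc t) \<le> a * f t + 2 * c" if "t \<ge> t0" for t
    proof -
      have tt: "3 / (1 - lam) \<le> real t" using t0ge that by linarith
      hence "3 \<le> real t * (1 - lam)" using lam by (simp add: divide_le_eq)
      hence h3: "3 \<le> real t - lam * real t" by (simp add: algebra_simps)
      have e: "(1 + lam) / 2 * (real t + 1) = (real t + 1 + lam * real t + lam) / 2"
        by (simp add: field_simps)
      have e2: "lam * (real t + 2) = lam * real t + 2 * lam" by (simp add: algebra_simps)
      have lin: "2 * (lam * real t + 2 * lam) \<le> real t + 1 + lam * real t + lam"
        using h3 lam by argo
      have key: "lam * (real t + 2) \<le> a * (real t + 1)" unfolding a_def e e2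
        using lin by (simp add: field_simps)
      have "f (Suc t) = (real t + 2) * e (Suc t)" unfolding f_def by simp
      also have "\<dots> \<le> (real t + 2) * (lam * e t + c / (real t + 1))"
        using rec by (simp add: mult_left_mono)
      also have "\<dots> = (lam * (real t + 2)) * e t + c * ((real t + 2) / (real t + 1))"
        by (simp add: algebra_simps)
      also have "\<dots> \<le> (a * (real t + 1)) * e t + c * 2"
      proof (rule add_mono)
        show "lam * (real t + 2) * e t \<le> a * (real t + 1) * e t"
          using key e0 by (simp add: mult_right_mono)
        have q2: "(real t + 2) / (real t + 1) \<le> 2" by (simp add: divide_le_eq)
        show "c * ((real t + 2) / (real t + 1)) \<le> c * 2" by (rule mult_left_mono[OF q2 c])
      qed
      finally show ?thesis unfolding f_def by (simp add: algebra_simps)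
    qed
    have ft0: "f t0 \<le> (real t0 + 1) * M" unfolding f_def by (rule mult_left_mono[OF bM]) simp
    have c2: "0 \<le> 2 * c" using c by simp
    have fb: "\<forall>t\<ge>t0. f t \<le> K" unfolding K_def by (rule lin_rec_bound[OF a01 c2 ft0 fstep])
    show "e t \<le> K / (real t + 1)"
    proof (cases "t \<ge> t0")
      case True
      hence "(real t + 1) * e t \<le> K" using fb unfolding f_def by blast
      thus ?thesis by (simp add: field_simps)
    next
      case False
      have "(real t + 1) * e t \<le> (real t0 + 1) * M"
      proof -
        have "(real t + 1) * e t \<le> (real t + 1) * M" by (rule mult_left_mono[OF bM]) simp
        also have "\<dots> \<le> (real t0 + 1) * M"
        proof (rule mult_right_mono)
          show "0 \<le> M" using bM[of 0] e0[rule_format, of 0] by linarith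
          show "real t + 1 \<le> real t0 + 1" using False by simp
        qed
        finally show ?thesis .
      qed
      also have "\<dots> \<le> K" unfolding K_def by simp
      finally show ?thesis by (simp add: field_simps)
    qed
  qed
qed

definition j0 :: "nat \<Rightarrow> nat \<Rightarrow> nat" where
  "j0 q t = (if t + 1 < q then 0 else q * ((t + 1) div q) - 1)"

lemma j0_facts:
  assumes q: "q \<ge> 1"
  shows "j0 q t \<le> t \<and> t < j0 q t + q"
proof -
  have dm: "t + 1 = q * ((t + 1) div q) + (t + 1) mod q" by simp
  have r: "(t + 1) mod q < q" using q by simp
  show ?thesis
  proof (cases "t + 1 < q")
    case True thus ?thesis unfolding j0_def by auto
  next
    case False
    hence "(t+1) div q \<ge> 1" using q by (simp add: div_greater_zero_iff Suc_le_eq)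
    hence p1: "q * ((t + 1) div q) \<ge> 1" using q by simp
    define p where "p = q * ((t + 1) div q)"
    define rr where "rr = (t + 1) mod q"
    have e1: "t + 1 = p + rr" "p \<ge> 1" "rr < q" using dm r p1 unfolding p_def rr_def by auto
    have "j0 q t = p - 1" unfolding j0_def p_def using False by simp
    thus ?thesis using e1 by arith
  qed
qed

lemma j0_reset:
  assumes q: "q \<ge> 1" and "(Suc t + 1) mod q = 0"
  shows "j0 q (Suc t) = Suc t"
proof -
  have "q dvd (Suc t + 1)" using assms by (simp add: mod_eq_0_iff_dvd)
  hence "q \<le> Suc t + 1" by (simp add: dvd_imp_le)
  moreover have "q * ((Suc t + 1) div q) = Suc t + 1" using \<open>q dvd _\<close> by simp
  ultimately show ?thesis unfolding j0_def by auto
qed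

lemma j0_keep:
  assumes q: "q \<ge> 1" and nr: "(Suc t + 1) mod q \<noteq> 0"
  shows "j0 q (Suc t) = j0 q t"
proof (cases "Suc t + 1 < q")
  case True thus ?thesis unfolding j0_def by auto
next
  case False
  have "Suc t + 1 \<noteq> q" using nr by auto
  hence ge: "\<not> t + 1 < q" using False by auto
  have "Suc (Suc t) div q = Suc t div q" using nr by (subst div_Suc) simp
  thus ?thesis unfolding j0_def using False ge by simp
qed

lemma rec_epoch:
  fixes c :: real
  assumes q: "q \<ge> 1" and c: "0 \<le> c"
  shows "\<exists>K. \<forall>e::nat \<Rightarrow> real. e 0 = 0 \<longrightarrow>
     (\<forall>t. (Suc t + 1) mod q = 0 \<longrightarrow> e (Suc t) = 0) \<longrightarrow>
     (\<forall>t. (Suc t + 1) mod q \<noteq> 0 \<longrightarrow> e (Suc t) \<le> e t + c / (real t + 1)) \<longrightarrow>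
     (\<forall>t. e t \<le> K / (real t + 1))"
proof (intro exI[of _ "c * real q * real q"] allI impI)
  fix e :: "nat \<Rightarrow> real" and t
  assume e0: "e 0 = 0" and rs: "\<forall>t. (Suc t + 1) mod q = 0 \<longrightarrow> e (Suc t) = 0"
    and st: "\<forall>t. (Suc t + 1) mod q \<noteq> 0 \<longrightarrow> e (Suc t) \<le> e t + c / (real t + 1)"
  have claim: "e t \<le> c * (real t - real (j0 q t)) / (real (j0 q t) + 1)" for t
  proof (induction t)
    case 0 thus ?case using e0 j0_facts[OF q, of 0] by simp
  next
    case (Suc t)
    show ?case
    proof (cases "(Suc t + 1) mod q = 0")
      case True thus ?thesis using rs j0_reset[OF q True] by simp
    next
      case False
      define j where "j = j0 q t"
      have jt: "j \<le> t" unfolding j_def using j0_facts[OF q] by blast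
      have "e (Suc t) \<le> c * (real t - real j) / (real j + 1) + c / (real t + 1)"
        using st False Suc unfolding j_def by (meson add_right_mono order_trans)
      also have "c / (real t + 1) \<le> c / (real j + 1)"
        using jt c by (intro divide_left_mono) auto
      also have "c * (real t - real j) / (real j + 1) + c / (real j + 1)
          = c * (real (Suc t) - real j) / (real j + 1)"
        by (simp only: add_divide_distrib[symmetric]) (simp add: algebra_simps)
      finally show ?thesis using j0_keep[OF q False] unfolding j_def by simp
    qed
  qed
  define j where "j = j0 q t"
  have jt: "j \<le> t" "t < j + q" unfolding j_def using j0_facts[OF q] by auto
  have "e t \<le> c * (real t - real j) / (real j + 1)" using claim unfolding j_def .
  also have "\<dots> \<le> c * real q / (real j + 1)"
    using jt c by (intro divide_right_mono mult_left_mono) auto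
  also have "\<dots> \<le> c * real q * real q / (real t + 1)"
  proof -
    have "real t + 1 \<le> real q * (real j + 1)"
    proof -
      have "1 * j \<le> q * j" by (rule mult_le_mono1) (use q in simp)
      hence "t + 1 \<le> q * j + q" using jt by linarith
      hence "t + 1 \<le> q * (j + 1)" by (simp add: algebra_simps)
      hence "real (t + 1) \<le> real (q * (j + 1))" by (simp only: of_nat_le_iff)
      thus ?thesis by (simp add: algebra_simps)
    qed
    hence "1 / (real j + 1) \<le> real q / (real t + 1)" using q by (simp add: field_simps)
    hence "c * real q * (1 / (real j + 1)) \<le> c * real q * (real q / (real t + 1))"
      using c by (intro mult_left_mono) auto
    thus ?thesis by simp
  qed
  finally show "e t \<le> c * real q * real q / (real t + 1)" .
qed

lemma fw_alg: fixes x c K :: real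
  assumes x: "x \<ge> 0" and Kc: "c * (x + 2) \<le> K * (x + 1)"
  shows "x / (x + 2) * (K / (x + 1)) + c / (x + 1)\<^sup>2 \<le> K / (x + 2)"
proof -
  have a: "x + 1 > 0" and b: "x + 2 > 0" using x by auto
  have h1: "c / (x + 1)\<^sup>2 = (c * (x + 2)) / ((x + 1)\<^sup>2 * (x + 2))" using b by simp
  have h2: "(c * (x + 2)) / ((x + 1)\<^sup>2 * (x + 2)) \<le> (K * (x + 1)) / ((x + 1)\<^sup>2 * (x + 2))"
    using Kc a b by (intro divide_right_mono) auto
  have h3: "(K * (x + 1)) / ((x + 1)\<^sup>2 * (x + 2)) = K / ((x + 1) * (x + 2))"
    using a b by (simp add: power2_eq_square)
  have h4: "x / (x + 2) * (K / (x + 1)) + K / ((x + 1) * (x + 2)) = K / (x + 2)"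
  proof -
    have "x / (x + 2) * (K / (x + 1)) = (K * x) / ((x + 1) * (x + 2))" by (simp add: mult.commute)
    hence "x / (x + 2) * (K / (x + 1)) + K / ((x + 1) * (x + 2)) = (K * x + K) / ((x + 1) * (x + 2))"
      by (simp add: add_divide_distrib)
    also have "K * x + K = K * (x + 1)" by (simp add: algebra_simps)
    also have "K * (x + 1) / ((x + 1) * (x + 2)) = K / (x + 2)" using a by simp
    finally show ?thesis .
  qed
  show ?thesis using h1 h2 h3 h4 by linarith
qed

lemma rec_fw:
  fixes c h0 :: real
  assumes c: "0 \<le> c"
  shows "\<exists>K. \<forall>h::nat \<Rightarrow> real. h 0 \<le> h0 \<longrightarrow>
     (\<forall>t. h (Suc t) \<le> (1 - 2 / (real (Suc t) + 1)) * h t + c / (real t + 1)\<^sup>2) \<longrightarrow>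
     (\<forall>t. h t \<le> K / (real t + 1))"
proof (intro exI[of _ "max h0 (2 * c)"] allI impI)
  fix h :: "nat \<Rightarrow> real" and t
  assume h0: "h 0 \<le> h0"
    and rec: "\<forall>t. h (Suc t) \<le> (1 - 2 / (real (Suc t) + 1)) * h t + c / (real t + 1)\<^sup>2"
  define K where "K = max h0 (2 * c)"
  show "h t \<le> max h0 (2 * c) / (real t + 1)"
  proof (induction t)
    case 0 thus ?case using h0 by simp
  next
    case (Suc t)
    have g: "1 - 2 / (real (Suc t) + 1) = real t / (real t + 2)" by (simp add: field_simps)
    have "h (Suc t) \<le> (1 - 2 / (real (Suc t) + 1)) * h t + c / (real t + 1)\<^sup>2" using rec by blast
    hence "h (Suc t) \<le> real t / (real t + 2) * h t + c / (real t + 1)\<^sup>2" by (simp only: g)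
    also have "\<dots> \<le> real t / (real t + 2) * (K / (real t + 1)) + c / (real t + 1)\<^sup>2"
      using Suc unfolding K_def by (intro add_right_mono mult_left_mono) auto
    also have "\<dots> \<le> K / (real t + 2)"
    proof -
      have Kc: "c * (real t + 2) \<le> K * (real t + 1)"
      proof -
        have "c * (real t + 2) \<le> 2 * c * (real t + 1)" using c by (simp add: algebra_simps)
        also have "\<dots> \<le> K * (real t + 1)" unfolding K_def by (intro mult_right_mono) auto
        finally show ?thesis .
      qed
      show ?thesis using fw_alg[OF _ Kc] by simp
    qed
    finally have "h (Suc t) \<le> K / (real t + 2)" .
    moreover have eq: "real (Suc t) + 1 = real t + 2" by simp
    ultimately show ?case unfolding eq K_def by simp
  qed
qed

definition gam :: "nat \<Rightarrow> real" where "gam t = 2 / (real (Suc t) + 1)"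

lemma gam_facts: "0 \<le> gam t" "gam t \<le> 1" "gam t \<le> 2 / (real t + 1)"
  unfolding gam_def by (auto simp: field_simps)

locale dfw =
  fixes \<Omega> U :: "'a::euclidean_space set"
    and m :: nat and n :: "nat \<Rightarrow> nat"
    and fij :: "nat \<Rightarrow> nat \<Rightarrow> 'a \<Rightarrow> real" and gr :: "nat \<Rightarrow> nat \<Rightarrow> 'a \<Rightarrow> 'a"
    and L :: real
    and E :: "nat \<Rightarrow> nat \<Rightarrow> bool" and W :: "nat \<Rightarrow> nat \<Rightarrow> real"
    and q :: nat and s :: "nat \<Rightarrow> nat"
    and lmo :: "nat \<Rightarrow> nat \<Rightarrow> 'a \<Rightarrow> 'a" and x1 :: "nat \<Rightarrow> 'a" and xstar :: 'a
  assumes Omega: "\<Omega> \<noteq> {}" "convex \<Omega>" "compact \<Omega>"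
    and m_pos: "m \<ge> 1" and n_pos: "\<forall>i<m. n i \<ge> 1"
    and nbhd: "open U" "\<Omega> \<subseteq> U"
    and diff: "\<forall>i<m. \<forall>j<n i. \<forall>x\<in>U. (fij i j has_derivative (\<lambda>h. gr i j x \<bullet> h)) (at x)"
    and smooth: "\<forall>i<m. \<forall>j<n i. \<forall>x\<in>U. \<forall>y\<in>U. norm (gr i j x - gr i j y) \<le> L * norm (x - y)"
    and cvx: "\<forall>i<m. convex_on \<Omega> (local_obj fij n i)"
    and W: "mixing_matrix m E W"
    and q_pos: "q \<ge> 1"
    and lmo: "\<forall>k i d. lmo k i d \<in> \<Omega> \<and> (\<forall>u\<in>\<Omega>. lmo k i d \<bullet> d \<le> u \<bullet> d)"
    and init: "\<forall>i<m. x1 i \<in> \<Omega>"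
    and opt: "xstar \<in> \<Omega>" "\<forall>x\<in>\<Omega>. global_obj m fij n xstar \<le> global_obj m fij n x"
begin

definition st where "st \<omega> t = dstofw m W n gr lmo (\<lambda>k. 2 / (real k + 1)) q s \<omega> x1 t"
definition X where "X \<omega> t = fst (st \<omega> t)"
definition V where "V \<omega> t = fst (snd (st \<omega> t))"
definition D where "D \<omega> t = snd (snd (st \<omega> t))"
definition g where "g i x = local_grad gr n i x"
definition Lp where "Lp = \<bar>L\<bar>"
definition valid :: "(nat \<times> nat \<times> nat \<Rightarrow> nat) \<Rightarrow> bool" where "valid \<omega> \<longleftrightarrow> (\<forall>t i l. i < m \<longrightarrow> \<omega> (t, i, l) < n i)"
definition u where "u \<omega> t i = lmo (Suc t) i (D \<omega> t i)"

lemma W_props: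
  "\<forall>i<m. \<forall>j<m. W i j = W j i" "\<forall>i<m. \<forall>j<m. 0 \<le> W i j"
  "\<forall>i<m. (\<Sum>j<m. W i j) = 1" "\<forall>j<m. (\<Sum>i<m. W i j) = 1"
proof -
  note Wd = W[unfolded mixing_matrix_def] and c2 = conjunct2
  show "\<forall>i<m. \<forall>j<m. W i j = W j i" using Wd by (rule conjunct1)
  show "\<forall>i<m. \<forall>j<m. 0 \<le> W i j" using Wd[THEN c2] by (rule conjunct1)
  show "\<forall>i<m. (\<Sum>j<m. W i j) = 1" using Wd[THEN c2, THEN c2, THEN c2] by (rule conjunct1)
  show "\<forall>j<m. (\<Sum>i<m. W i j) = 1" using Wd[THEN c2, THEN c2, THEN c2, THEN c2] by (rule conjunct1)
qed

lemma st0: "X \<omega> 0 = x1" "V \<omega> 0 = (\<lambda>i. g i (x1 i))" "D \<omega> 0 = (\<lambda>i. g i (x1 i))"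
  unfolding X_def V_def D_def st_def g_def by simp_all

lemma st_step:
  "X \<omega> (Suc t) = (\<lambda>i. (1 - gam t) *\<^sub>R mixv m W (X \<omega> t) i + gam t *\<^sub>R u \<omega> t i)"
  "V \<omega> (Suc t) = (\<lambda>i. if (Suc t + 1) mod q = 0 then g i (X \<omega> (Suc t) i)
      else (1 / real (s (Suc t))) *\<^sub>R
        (\<Sum>l<s (Suc t). gr i (\<omega> (Suc t, i, l)) (X \<omega> (Suc t) i) - gr i (\<omega> (Suc t, i, l)) (X \<omega> t i))
        + V \<omega> t i)"
  "D \<omega> (Suc t) = mixv m W (\<lambda>i. D \<omega> t i + V \<omega> (Suc t) i - V \<omega> t i)"
proof -
  obtain x v d where xvd: "st \<omega> t = (x, v, d)" by (cases "st \<omega> t") auto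
  define XX where "XX = (\<lambda>i. (1 - gam t) *\<^sub>R mixv m W x i + gam t *\<^sub>R lmo (Suc t) i (d i))"
  define VV where "VV = (\<lambda>i. if (Suc t + 1) mod q = 0 then g i (XX i)
      else (1 / real (s (Suc t))) *\<^sub>R
        (\<Sum>l<s (Suc t). gr i (\<omega> (Suc t, i, l)) (XX i) - gr i (\<omega> (Suc t, i, l)) (x i)) + v i)"
  define DD where "DD = mixv m W (\<lambda>i. d i + VV i - v i)"
  have S: "st \<omega> (Suc t) = (XX, VV, DD)"
    unfolding st_def DD_def VV_def XX_def gam_def mixv_def g_def dstofw.simps(2) xvd[unfolded st_def]
    by (simp add: Let_def)
  have Xt: "X \<omega> t = x" "V \<omega> t = v" "D \<omega> t = d" unfolding X_def V_def D_def xvd by simp_all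
  have X1: "X \<omega> (Suc t) = XX" unfolding X_def S by simp
  have V1: "V \<omega> (Suc t) = VV" unfolding V_def S by simp
  have D1: "D \<omega> (Suc t) = DD" unfolding D_def S by simp
  show "X \<omega> (Suc t) = (\<lambda>i. (1 - gam t) *\<^sub>R mixv m W (X \<omega> t) i + gam t *\<^sub>R u \<omega> t i)"
    unfolding X1 XX_def u_def Xt ..
  show "V \<omega> (Suc t) = (\<lambda>i. if (Suc t + 1) mod q = 0 then g i (X \<omega> (Suc t) i)
      else (1 / real (s (Suc t))) *\<^sub>R
        (\<Sum>l<s (Suc t). gr i (\<omega> (Suc t, i, l)) (X \<omega> (Suc t) i) - gr i (\<omega> (Suc t, i, l)) (X \<omega> t i))
        + V \<omega> t i)"
    unfolding V1 X1 Xt VV_def ..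
  show "D \<omega> (Suc t) = mixv m W (\<lambda>i. D \<omega> t i + V \<omega> (Suc t) i - V \<omega> t i)"
    unfolding D1 V1 Xt DD_def ..
qed

end

lemma nrm_cong: "(\<forall>i<m. z i = w i) \<Longrightarrow> nrm m z = nrm m w"
  unfolding nrm_def by (intro L2_set_cong) auto

lemma avgv_lin: "avgv m (\<lambda>i. a *\<^sub>R f i + b *\<^sub>R h i) = a *\<^sub>R avgv m f + b *\<^sub>R avgv m h"
  unfolding avgv_def by (simp add: sum.distrib scaleR_sum_right[symmetric] scaleR_add_right)

lemma dev_lin: "dev m (\<lambda>i. a *\<^sub>R f i + b *\<^sub>R h i) i = a *\<^sub>R dev m f i + b *\<^sub>R dev m h i"
  unfolding dev_def avgv_lin by (simp add: algebra_simps)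

lemma avgv_add3: "avgv m (\<lambda>i. f i + h i - k i) = avgv m f + avgv m h - avgv m k"
  unfolding avgv_def by (simp add: sum.distrib sum_subtractf scaleR_diff_right scaleR_add_right)

lemma dev_add3: "dev m (\<lambda>i. f i + h i - k i) i = dev m f i + dev m h i - dev m k i"
  unfolding dev_def avgv_add3 by (simp add: algebra_simps)

lemma avgv_diff: "avgv m (\<lambda>i. f i - h i) = avgv m f - avgv m h"
  unfolding avgv_def by (simp add: sum_subtractf scaleR_diff_right)

lemma norm_avgv_le: assumes "m \<ge> 1" "\<forall>i<m. norm (z i) \<le> B" shows "norm (avgv m z) \<le> B"
proof -
  have "norm (\<Sum>i<m. z i) \<le> (\<Sum>i<m. norm (z i))" by (rule norm_sum)
  also have "\<dots> \<le> (\<Sum>i<m. B)" using assms by (intro sum_mono) auto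
  also have "\<dots> = real m * B" by simp
  finally have "norm (\<Sum>i<m. z i) \<le> real m * B" .
  thus ?thesis using assms unfolding avgv_def by (simp add: field_simps)
qed

context dfw begin

definition rho where "rho = 2 * \<bar>SOME a. \<forall>x\<in>\<Omega>. norm x \<le> a\<bar>"

lemma rho_facts: "0 \<le> rho" "x \<in> \<Omega> \<Longrightarrow> y \<in> \<Omega> \<Longrightarrow> norm (x - y) \<le> rho"
proof -
  have "bounded \<Omega>" using Omega(3) by (rule compact_imp_bounded)
  hence "\<exists>a. \<forall>x\<in>\<Omega>. norm x \<le> a" by (simp add: bounded_iff)
  hence a: "\<forall>x\<in>\<Omega>. norm x \<le> (SOME a. \<forall>x\<in>\<Omega>. norm x \<le> a)" by (rule someI_ex)
  show "0 \<le> rho" unfolding rho_def by simp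
  assume "x \<in> \<Omega>" "y \<in> \<Omega>"
  hence "norm x \<le> \<bar>SOME a. \<forall>x\<in>\<Omega>. norm x \<le> a\<bar>" "norm y \<le> \<bar>SOME a. \<forall>x\<in>\<Omega>. norm x \<le> a\<bar>"
    using a by force+
  moreover have "norm (x - y) \<le> norm x + norm y" by (rule norm_triangle_ineq4)
  ultimately show "norm (x - y) \<le> rho" unfolding rho_def by linarith
qed

lemma mix_in: assumes "\<forall>j<m. z j \<in> \<Omega>" "i < m" shows "mixv m W z i \<in> \<Omega>"
  unfolding mixv_def
  by (rule convex_sum[OF finite_lessThan Omega(2)]) (use W_props assms in auto)

lemma avg_in: assumes "\<forall>j<m. z j \<in> \<Omega>" shows "avgv m z \<in> \<Omega>"
proof -
  have "(\<Sum>j<m. (1 / real m) *\<^sub>R z j) \<in> \<Omega>"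
    by (rule convex_sum[OF finite_lessThan Omega(2)]) (use assms m_pos in auto)
  thus ?thesis unfolding avgv_def by (simp add: scaleR_sum_right)
qed

lemma u_in: "u \<omega> t i \<in> \<Omega>" unfolding u_def using lmo by blast

lemma X_in: "i < m \<Longrightarrow> X \<omega> t i \<in> \<Omega>"
proof (induction t arbitrary: i)
  case 0 thus ?case using init by (simp add: st0)
next
  case (Suc t)
  have "mixv m W (X \<omega> t) i \<in> \<Omega>" using Suc by (intro mix_in) auto
  thus ?case unfolding st_step(1) using u_in[of \<omega> t i] gam_facts[of t] Omega(2)
    by (simp add: convex_alt)
qed

definition xb where "xb \<omega> t = avgv m (X \<omega> t)"

lemma xb_in: "xb \<omega> t \<in> \<Omega>" unfolding xb_def by (rule avg_in) (use X_in in auto)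

lemma xb_step: "xb \<omega> (Suc t) = (1 - gam t) *\<^sub>R xb \<omega> t + gam t *\<^sub>R avgv m (u \<omega> t)"
  unfolding xb_def st_step(1) avgv_lin avgv_mixv[OF W_props(4)] ..

lemma dev_X_step: "i < m \<Longrightarrow> dev m (X \<omega> (Suc t)) i =
    (1 - gam t) *\<^sub>R mixv m W (dev m (X \<omega> t)) i + gam t *\<^sub>R dev m (u \<omega> t) i"
proof -
  assume i: "i < m"
  show ?thesis unfolding st_step(1) dev_lin by (simp add: mixv_dev[OF W_props(3,4) i])
qed

definition lam where "lam = (SOME lam. 0 \<le> lam \<and> lam < 1 \<and> (\<forall>z::nat \<Rightarrow> 'a. (\<Sum>i<m. z i) = 0 \<longrightarrow>
           nrm m (mixv m W z) \<le> lam * nrm m z))"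

lemma lam_facts: "0 \<le> lam" "lam < 1"
  "\<And>z::nat \<Rightarrow> 'a. (\<Sum>i<m. z i) = 0 \<Longrightarrow> nrm m (mixv m W z) \<le> lam * nrm m z"
proof -
  have "\<exists>lam. 0 \<le> lam \<and> lam < 1 \<and> (\<forall>z::nat \<Rightarrow> 'a. (\<Sum>i<m. z i) = 0 \<longrightarrow>
           nrm m (mixv m W z) \<le> lam * nrm m z)" by (rule contraction_vec[OF W])
  note l = someI_ex[OF this, folded lam_def]
  show "0 \<le> lam" "lam < 1" using l by auto
  show "\<And>z::nat \<Rightarrow> 'a. (\<Sum>i<m. z i) = 0 \<Longrightarrow> nrm m (mixv m W z) \<le> lam * nrm m z" using l by auto
qed

lemma mix_dev_contract: "nrm m (mixv m W (dev m z)) \<le> lam * nrm m (dev m (z :: nat \<Rightarrow> 'a))"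
  by (rule lam_facts(3)) (rule sum_dev[OF m_pos])

definition Cx where "Cx \<omega> t = nrm m (dev m (X \<omega> t))"

lemma Cx_step: "Cx \<omega> (Suc t) \<le> lam * Cx \<omega> t + 2 * (sqrt (real m) * rho) / (real t + 1)"
proof -
  have "Cx \<omega> (Suc t) = nrm m (\<lambda>i. (1 - gam t) *\<^sub>R mixv m W (dev m (X \<omega> t)) i + gam t *\<^sub>R dev m (u \<omega> t) i)"
    unfolding Cx_def by (rule nrm_cong) (simp add: dev_X_step)
  also have "\<dots> \<le> nrm m (\<lambda>i. (1 - gam t) *\<^sub>R mixv m W (dev m (X \<omega> t)) i) + nrm m (\<lambda>i. gam t *\<^sub>R dev m (u \<omega> t) i)"
    by (rule nrm_triangle)
  also have "\<dots> = (1 - gam t) * nrm m (mixv m W (dev m (X \<omega> t))) + gam t * nrm m (dev m (u \<omega> t))"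
    using gam_facts[of t] by (simp add: nrm_scale)
  also have "\<dots> \<le> 1 * (lam * Cx \<omega> t) + gam t * (sqrt (real m) * rho)"
  proof (rule add_mono)
    have "nrm m (mixv m W (dev m (X \<omega> t))) \<le> lam * Cx \<omega> t" unfolding Cx_def by (rule mix_dev_contract)
    moreover have "0 \<le> nrm m (mixv m W (dev m (X \<omega> t)))" by (rule nrm_nonneg)
    ultimately show "(1 - gam t) * nrm m (mixv m W (dev m (X \<omega> t))) \<le> 1 * (lam * Cx \<omega> t)"
      using gam_facts[of t] by (intro mult_mono) auto
    have "nrm m (dev m (u \<omega> t)) \<le> sqrt (real m) * rho"
      unfolding dev_def
      by (rule nrm_bound) (use rho_facts(2) u_in avg_in in blast)
    thus "gam t * nrm m (dev m (u \<omega> t)) \<le> gam t * (sqrt (real m) * rho)"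
      using gam_facts[of t] by (intro mult_left_mono) auto
  qed
  also have "gam t * (sqrt (real m) * rho) \<le> 2 / (real t + 1) * (sqrt (real m) * rho)"
    using gam_facts[of t] rho_facts(1) by (intro mult_right_mono) auto
  finally show ?thesis by simp
qed

lemma Cx_nonneg: "0 \<le> Cx \<omega> t" unfolding Cx_def by (rule nrm_nonneg)

lemma Kx_ex: "\<exists>K. \<forall>\<omega> t. Cx \<omega> t \<le> K / (real t + 1)"
proof -
  have c: "0 \<le> 2 * (sqrt (real m) * rho)" using rho_facts(1) by simp
  obtain K where K: "\<forall>e::nat \<Rightarrow> real. (\<forall>t. 0 \<le> e t) \<longrightarrow> e 0 \<le> nrm m (dev m x1) \<longrightarrow>
     (\<forall>t. e (Suc t) \<le> lam * e t + 2 * (sqrt (real m) * rho) / (real t + 1)) \<longrightarrow> (\<forall>t. e t \<le> K / (real t + 1))"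
    using rec_geom[OF lam_facts(1,2) c] by blast
  have "Cx \<omega> t \<le> K / (real t + 1)" for \<omega> t
    using K[rule_format, of "Cx \<omega>"] Cx_nonneg Cx_step by (simp add: Cx_def st0)
  thus ?thesis by blast
qed

definition Kx where "Kx = (SOME K. \<forall>\<omega> t. Cx \<omega> t \<le> K / (real t + 1))"
lemma Kx: "Cx \<omega> t \<le> Kx / (real t + 1)"
  using someI_ex[OF Kx_ex] unfolding Kx_def[symmetric] by blast
lemma Kx_nonneg: "0 \<le> Kx"
proof -
  have "Cx \<omega> 0 \<le> Kx" for \<omega> using Kx[of \<omega> 0] by simp
  thus ?thesis using Cx_nonneg by (meson order_trans)
qed

lemma X_near: "i < m \<Longrightarrow> norm (X \<omega> t i - xb \<omega> t) \<le> Kx / (real t + 1)"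
proof -
  assume "i < m"
  hence "norm (dev m (X \<omega> t) i) \<le> Cx \<omega> t" unfolding Cx_def by (rule nrm_component)
  thus ?thesis using Kx[of \<omega> t] unfolding dev_def xb_def by linarith
qed

definition Km where "Km = 2 * Kx + 2 * rho"

lemma X_move: "i < m \<Longrightarrow> norm (X \<omega> (Suc t) i - X \<omega> t i) \<le> Km / (real t + 1)"
proof -
  assume i: "i < m"
  have "norm (X \<omega> (Suc t) i - X \<omega> t i) \<le> norm (X \<omega> (Suc t) i - xb \<omega> (Suc t))
      + norm (xb \<omega> (Suc t) - xb \<omega> t) + norm (xb \<omega> t - X \<omega> t i)"
  proof -
    let ?a = "X \<omega> (Suc t) i - xb \<omega> (Suc t)" and ?b = "xb \<omega> (Suc t) - xb \<omega> t" and ?c = "xb \<omega> t - X \<omega> t i"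
    have "X \<omega> (Suc t) i - X \<omega> t i = (?a + ?b) + ?c" by simp
    hence "norm (X \<omega> (Suc t) i - X \<omega> t i) \<le> norm (?a + ?b) + norm ?c"
      using norm_triangle_ineq[of "?a + ?b" ?c] by simp
    moreover have "norm (?a + ?b) \<le> norm ?a + norm ?b" by (rule norm_triangle_ineq)
    ultimately show ?thesis by linarith
  qed
  also have "norm (X \<omega> (Suc t) i - xb \<omega> (Suc t)) \<le> Kx / (real t + 1)"
  proof -
    have "norm (X \<omega> (Suc t) i - xb \<omega> (Suc t)) \<le> Kx / (real (Suc t) + 1)" by (rule X_near[OF i])
    also have "\<dots> \<le> Kx / (real t + 1)" using Kx_nonneg by (intro divide_left_mono) auto
    finally show ?thesis .
  qed
  also have "norm (xb \<omega> (Suc t) - xb \<omega> t) \<le> 2 * rho / (real t + 1)"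
  proof -
    have "xb \<omega> (Suc t) - xb \<omega> t = gam t *\<^sub>R (avgv m (u \<omega> t) - xb \<omega> t)"
      unfolding xb_step by (simp add: algebra_simps)
    hence "norm (xb \<omega> (Suc t) - xb \<omega> t) = gam t * norm (avgv m (u \<omega> t) - xb \<omega> t)"
      using gam_facts[of t] by simp
    also have "\<dots> \<le> 2 / (real t + 1) * rho"
      using gam_facts[of t] rho_facts avg_in[of "u \<omega> t"] u_in xb_in by (intro mult_mono) auto
    finally show ?thesis by simp
  qed
  also have "norm (xb \<omega> t - X \<omega> t i) \<le> Kx / (real t + 1)"
    using X_near[OF i, of \<omega> t] by (simp add: norm_minus_commute)
  finally show ?thesis unfolding Km_def by (simp add: add_divide_distrib)
qed

end

lemma norm_sample_avg: assumes "\<forall>l<N. norm (a l) \<le> B" "0 \<le> B"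
  shows "norm ((1 / real N) *\<^sub>R (\<Sum>l<N. a l)) \<le> B"
proof (cases "N = 0")
  case True thus ?thesis using assms by simp
next
  case False
  have "norm (\<Sum>l<N. a l) \<le> (\<Sum>l<N. norm (a l))" by (rule norm_sum)
  also have "\<dots> \<le> (\<Sum>l<N. B)" using assms by (intro sum_mono) auto
  finally have "norm (\<Sum>l<N. a l) \<le> real N * B" by simp
  thus ?thesis using False by (simp add: field_simps)
qed

lemma dev_diff: "dev m (\<lambda>i. f i - h i) i = dev m f i - dev m h i"
  unfolding dev_def avgv_diff by (simp add: algebra_simps)

context dfw begin

lemma Lp_nonneg: "0 \<le> Lp" unfolding Lp_def by simp

lemma gr_lip: "i < m \<Longrightarrow> j < n i \<Longrightarrow> x \<in> U \<Longrightarrow> y \<in> U \<Longrightarrow> norm (gr i j x - gr i j y) \<le> Lp * norm (x - y)"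
proof -
  assume a: "i < m" "j < n i" "x \<in> U" "y \<in> U"
  have "norm (gr i j x - gr i j y) \<le> L * norm (x - y)" using smooth a by blast
  also have "\<dots> \<le> Lp * norm (x - y)" unfolding Lp_def by (intro mult_right_mono) auto
  finally show ?thesis .
qed

lemma g_lip: assumes "i < m" "x \<in> U" "y \<in> U" shows "norm (g i x - g i y) \<le> Lp * norm (x - y)"
proof -
  have "g i x - g i y = (1 / real (n i)) *\<^sub>R (\<Sum>j<n i. gr i j x - gr i j y)"
    unfolding g_def local_grad_def by (simp add: sum_subtractf scaleR_diff_right)
  also have "norm \<dots> \<le> Lp * norm (x - y)"
    by (rule norm_sample_avg) (use gr_lip assms Lp_nonneg in auto)
  finally show ?thesis .
qed

definition err where "err \<omega> t i = norm (V \<omega> t i - g i (X \<omega> t i))"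

lemma err0: "err \<omega> 0 i = 0" unfolding err_def by (simp add: st0)

lemma err_reset: "(Suc t + 1) mod q = 0 \<Longrightarrow> err \<omega> (Suc t) i = 0"
  unfolding err_def by (simp add: st_step(2))

lemma Km_nonneg: "0 \<le> Km" unfolding Km_def using Kx_nonneg rho_facts(1) by simp

lemma XU: "i < m \<Longrightarrow> X \<omega> t i \<in> U" using X_in nbhd(2) by blast

lemma dX_bound: "i < m \<Longrightarrow> Lp * norm (X \<omega> (Suc t) i - X \<omega> t i) \<le> Lp * Km / (real t + 1)"
proof -
  assume i: "i < m"
  show ?thesis using mult_left_mono[OF X_move[OF i, of \<omega> t] Lp_nonneg] by simp
qed

lemma err_step: assumes v: "valid \<omega>" and i: "i < m" and nr: "(Suc t + 1) mod q \<noteq> 0"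
  shows "err \<omega> (Suc t) i \<le> err \<omega> t i + 2 * Lp * Km / (real t + 1)"
proof -
  define x' where "x' = X \<omega> (Suc t) i"
  define x where "x = X \<omega> t i"
  define S where "S = (1 / real (s (Suc t))) *\<^sub>R
        (\<Sum>l<s (Suc t). gr i (\<omega> (Suc t, i, l)) x' - gr i (\<omega> (Suc t, i, l)) x)"
  have V': "V \<omega> (Suc t) i = S + V \<omega> t i" unfolding S_def x'_def x_def using nr by (simp add: st_step(2))
  have "V \<omega> (Suc t) i - g i x' = (V \<omega> t i - g i x) + S - (g i x' - g i x)" unfolding V' by simp
  hence "err \<omega> (Suc t) i = norm (((V \<omega> t i - g i x) + S) - (g i x' - g i x))"
    unfolding err_def x'_def[symmetric] by simp
  also have "\<dots> \<le> norm ((V \<omega> t i - g i x) + S) + norm (g i x' - g i x)"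
    by (rule norm_triangle_ineq4)
  also have "\<dots> \<le> err \<omega> t i + norm S + norm (g i x' - g i x)"
    unfolding err_def x_def[symmetric] using norm_triangle_ineq by simp
  also have "norm S \<le> Lp * norm (x' - x)"
    unfolding S_def
    by (rule norm_sample_avg) (use v i gr_lip XU Lp_nonneg in \<open>auto simp: valid_def x'_def x_def\<close>)
  also have "norm (g i x' - g i x) \<le> Lp * norm (x' - x)"
    using g_lip i XU unfolding x'_def x_def by blast
  finally show ?thesis using dX_bound[OF i, of \<omega> t] unfolding x'_def x_def by simp
qed

lemma Kv_ex: "\<exists>K. \<forall>\<omega> t i. valid \<omega> \<longrightarrow> i < m \<longrightarrow> err \<omega> t i \<le> K / (real t + 1)"
proof -
  have c: "0 \<le> 2 * Lp * Km" using Lp_nonneg Km_nonneg by simp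
  obtain K where K: "\<forall>e::nat \<Rightarrow> real. e 0 = 0 \<longrightarrow>
     (\<forall>t. (Suc t + 1) mod q = 0 \<longrightarrow> e (Suc t) = 0) \<longrightarrow>
     (\<forall>t. (Suc t + 1) mod q \<noteq> 0 \<longrightarrow> e (Suc t) \<le> e t + 2 * Lp * Km / (real t + 1)) \<longrightarrow>
     (\<forall>t. e t \<le> K / (real t + 1))"
    using rec_epoch[OF q_pos c] by blast
  have K': "\<forall>t. e t \<le> K / (real t + 1)" if "e 0 = 0"
     "\<forall>t. (Suc t + 1) mod q = 0 \<longrightarrow> e (Suc t) = 0"
     "\<forall>t. (Suc t + 1) mod q \<noteq> 0 \<longrightarrow> e (Suc t) \<le> e t + 2 * Lp * Km / (real t + 1)" for e
    using K that by blast
  have "\<forall>t. err \<omega> t i \<le> K / (real t + 1)" if "valid \<omega>" "i < m" for \<omega> i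
    by (rule K') (use err0 err_reset err_step[OF that] in auto)
  hence "err \<omega> t i \<le> K / (real t + 1)" if "valid \<omega>" "i < m" for \<omega> t i using that by blast
  thus ?thesis by blast
qed

definition Kv where "Kv = (SOME K. \<forall>\<omega> t i. valid \<omega> \<longrightarrow> i < m \<longrightarrow> err \<omega> t i \<le> K / (real t + 1))"
lemma Kv: "valid \<omega> \<Longrightarrow> i < m \<Longrightarrow> err \<omega> t i \<le> Kv / (real t + 1)"
  using someI_ex[OF Kv_ex] unfolding Kv_def[symmetric] by blast

lemma Kv_nonneg: "valid \<omega> \<Longrightarrow> 0 \<le> Kv"
proof -
  assume "valid \<omega>"
  hence "err \<omega> 0 0 \<le> Kv" using Kv[of \<omega> 0 0] m_pos by simp
  thus ?thesis using err0 by simp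
qed

definition Kdv where "Kdv = 2 * Kv + Lp * Km"

lemma dV: assumes v: "valid \<omega>" and i: "i < m"
  shows "norm (V \<omega> (Suc t) i - V \<omega> t i) \<le> Kdv / (real t + 1)"
proof -
  let ?a = "V \<omega> (Suc t) i - g i (X \<omega> (Suc t) i)" and ?b = "g i (X \<omega> (Suc t) i) - g i (X \<omega> t i)"
    and ?c = "V \<omega> t i - g i (X \<omega> t i)"
  have "V \<omega> (Suc t) i - V \<omega> t i = (?a + ?b) - ?c" by simp
  hence "norm (V \<omega> (Suc t) i - V \<omega> t i) = norm ((?a + ?b) - ?c)" by simp
  also have "\<dots> \<le> norm (?a + ?b) + norm ?c" by (rule norm_triangle_ineq4)
  also have "\<dots> \<le> norm ?a + norm ?b + norm ?c" using norm_triangle_ineq[of ?a ?b] by simp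
  also have "norm ?a \<le> Kv / (real t + 1)"
  proof -
    have "norm ?a \<le> Kv / (real (Suc t) + 1)" using Kv[OF v i, of "Suc t"] unfolding err_def .
    also have "\<dots> \<le> Kv / (real t + 1)" using Kv_nonneg[OF v] by (intro divide_left_mono) auto
    finally show ?thesis .
  qed
  also have "norm ?b \<le> Lp * Km / (real t + 1)"
    using g_lip[OF i XU[OF i] XU[OF i]] dX_bound[OF i] by (meson order_trans)
  also have "norm ?c \<le> Kv / (real t + 1)" using Kv[OF v i, of t] unfolding err_def .
  finally show ?thesis unfolding Kdv_def by (simp add: add_divide_distrib)
qed

lemma Kdv_nonneg: assumes "valid \<omega>" shows "0 \<le> Kdv"
  unfolding Kdv_def using Kv_nonneg[OF assms] Lp_nonneg Km_nonneg by simp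

definition Cd where "Cd \<omega> t = nrm m (dev m (D \<omega> t))"

lemma Cd_nonneg: "0 \<le> Cd \<omega> t" unfolding Cd_def by (rule nrm_nonneg)

lemma Cd_step: assumes v: "valid \<omega>"
  shows "Cd \<omega> (Suc t) \<le> lam * Cd \<omega> t + sqrt (real m) * Kdv / (real t + 1)"
proof -
  define gg where "gg = (\<lambda>i. D \<omega> t i + V \<omega> (Suc t) i - V \<omega> t i)"
  define dv where "dv = (\<lambda>i. V \<omega> (Suc t) i - V \<omega> t i)"
  have "Cd \<omega> (Suc t) = nrm m (mixv m W (dev m gg))"
    unfolding Cd_def st_step(3) gg_def[symmetric]
    by (rule nrm_cong) (simp add: mixv_dev[OF W_props(3,4)])
  also have "\<dots> \<le> lam * nrm m (dev m gg)" by (rule mix_dev_contract)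
  also have "nrm m (dev m gg) \<le> Cd \<omega> t + sqrt (real m) * Kdv / (real t + 1)"
  proof -
    have "nrm m (dev m gg) = nrm m (\<lambda>i. dev m (D \<omega> t) i + dev m dv i)"
      unfolding gg_def dv_def dev_add3 dev_diff by (rule nrm_cong) simp
    also have "\<dots> \<le> Cd \<omega> t + nrm m (dev m dv)" unfolding Cd_def by (rule nrm_triangle)
    also have "nrm m (dev m dv) \<le> nrm m dv" by (rule nrm_dev_le)
    also have "nrm m dv \<le> sqrt (real m) * (Kdv / (real t + 1))"
      by (rule nrm_bound) (use dV[OF v] in \<open>auto simp: dv_def\<close>)
    finally show ?thesis by simp
  qed
  hence "lam * nrm m (dev m gg) \<le> lam * (Cd \<omega> t + sqrt (real m) * Kdv / (real t + 1))"
    by (rule mult_left_mono) (rule lam_facts(1))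
  also have "\<dots> \<le> lam * Cd \<omega> t + sqrt (real m) * Kdv / (real t + 1)"
  proof -
    have "0 \<le> sqrt (real m) * Kdv / (real t + 1)" using Kdv_nonneg[OF v] by simp
    hence "lam * (sqrt (real m) * Kdv / (real t + 1)) \<le> sqrt (real m) * Kdv / (real t + 1)"
      using lam_facts(1,2) by (intro mult_left_le_one_le) auto
    thus ?thesis by (simp add: distrib_left)
  qed
  finally show ?thesis .
qed

lemma Kd_ex: "\<exists>K. \<forall>\<omega> t. valid \<omega> \<longrightarrow> Cd \<omega> t \<le> K / (real t + 1)"
proof (cases "\<exists>\<omega>. valid \<omega>")
  case False thus ?thesis by auto
next
  case True
  then obtain \<omega>0 where "valid \<omega>0" by blast
  have c: "0 \<le> sqrt (real m) * Kdv" using Kdv_nonneg[OF \<open>valid \<omega>0\<close>] by simp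
  obtain K where K: "\<forall>e::nat \<Rightarrow> real. (\<forall>t. 0 \<le> e t) \<longrightarrow> e 0 \<le> nrm m (dev m (\<lambda>i. g i (x1 i))) \<longrightarrow>
     (\<forall>t. e (Suc t) \<le> lam * e t + sqrt (real m) * Kdv / (real t + 1)) \<longrightarrow> (\<forall>t. e t \<le> K / (real t + 1))"
    using rec_geom[OF lam_facts(1,2) c] by blast
  have "Cd \<omega> t \<le> K / (real t + 1)" if "valid \<omega>" for \<omega> t
    using K[rule_format, of "Cd \<omega>"] Cd_nonneg Cd_step[OF that] by (simp add: Cd_def st0)
  thus ?thesis by blast
qed

definition Kd where "Kd = (SOME K. \<forall>\<omega> t. valid \<omega> \<longrightarrow> Cd \<omega> t \<le> K / (real t + 1))"
lemma Kd: "valid \<omega> \<Longrightarrow> Cd \<omega> t \<le> Kd / (real t + 1)"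
  using someI_ex[OF Kd_ex] unfolding Kd_def[symmetric] by blast

lemma avgD: "avgv m (D \<omega> t) = avgv m (V \<omega> t)"
proof (induction t)
  case 0 thus ?case by (simp add: st0)
next
  case (Suc t)
  have "avgv m (D \<omega> (Suc t)) = avgv m (\<lambda>i. D \<omega> t i + V \<omega> (Suc t) i - V \<omega> t i)"
    unfolding st_step(3) by (rule avgv_mixv[OF W_props(4)])
  also have "\<dots> = avgv m (V \<omega> (Suc t))" unfolding avgv_add3 Suc by simp
  finally show ?case .
qed

definition gF where "gF x = avgv m (\<lambda>i. g i x)"
definition Ke where "Ke = Kd + Kv + Lp * Kx"

lemma track: assumes v: "valid \<omega>" and i: "i < m"
  shows "norm (D \<omega> t i - gF (xb \<omega> t)) \<le> Ke / (real t + 1)"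
proof -
  let ?a = "dev m (D \<omega> t) i"
  let ?b = "avgv m (\<lambda>j. V \<omega> t j - g j (X \<omega> t j))"
  let ?c = "avgv m (\<lambda>j. g j (X \<omega> t j) - g j (xb \<omega> t))"
  have "D \<omega> t i - gF (xb \<omega> t) = ?a + ?b + ?c"
    unfolding dev_def avgv_diff gF_def avgD by simp
  hence "norm (D \<omega> t i - gF (xb \<omega> t)) = norm (?a + ?b + ?c)" by simp
  also have "\<dots> \<le> norm (?a + ?b) + norm ?c" by (rule norm_triangle_ineq)
  also have "\<dots> \<le> norm ?a + norm ?b + norm ?c" using norm_triangle_ineq[of ?a ?b] by simp
  also have "norm ?a \<le> Kd / (real t + 1)"
    using nrm_component[OF i, of "dev m (D \<omega> t)"] Kd[OF v, of t] unfolding Cd_def by linarith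
  also have "norm ?b \<le> Kv / (real t + 1)"
    by (rule norm_avgv_le[OF m_pos]) (use Kv[OF v] in \<open>auto simp: err_def\<close>)
  also have "norm ?c \<le> Lp * Kx / (real t + 1)"
  proof (rule norm_avgv_le[OF m_pos], intro allI impI)
    fix j assume j: "j < m"
    have "norm (g j (X \<omega> t j) - g j (xb \<omega> t)) \<le> Lp * norm (X \<omega> t j - xb \<omega> t)"
      using g_lip[OF j XU[OF j]] xb_in nbhd(2) by blast
    also have "\<dots> \<le> Lp * (Kx / (real t + 1))"
      using X_near[OF j] Lp_nonneg by (intro mult_left_mono) auto
    finally show "norm (g j (X \<omega> t j) - g j (xb \<omega> t)) \<le> Lp * Kx / (real t + 1)" by simp
  qed
  finally show ?thesis unfolding Ke_def by (simp add: add_divide_distrib)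
qed

end

lemma inner_avgv_le: assumes "m \<ge> 1" "\<forall>i<m. inner (z i) a \<le> B" shows "inner (avgv m z) a \<le> B"
proof -
  have "inner (avgv m z) a = (1 / real m) * (\<Sum>i<m. inner (z i) a)"
    unfolding avgv_def by (simp add: inner_sum_left)
  also have "(\<Sum>i<m. inner (z i) a) \<le> (\<Sum>i<m. B)" using assms by (intro sum_mono) auto
  hence "(1 / real m) * (\<Sum>i<m. inner (z i) a) \<le> (1 / real m) * (\<Sum>i<m. B)"
    by (intro mult_left_mono) auto
  also have "(1 / real m) * (\<Sum>i<m. B) = B" using assms by simp
  finally show ?thesis by simp
qed

lemma avgv_const: "m \<ge> 1 \<Longrightarrow> avgv m (\<lambda>i. c) = c"
  unfolding avgv_def by (simp add: sum_constant_scaleR)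

context dfw begin

abbreviation F where "F \<equiv> global_obj m fij n"

lemma local_deriv: assumes i: "i < m" and x: "x \<in> U"
  shows "(local_obj fij n i has_derivative (\<lambda>h. g i x \<bullet> h)) (at x)"
proof -
  have eq: "local_obj fij n i = (\<lambda>x. (1 / real (n i)) * (\<Sum>j<n i. fij i j x))"
    by (rule ext) (simp add: local_obj_def)
  have "((\<lambda>x. (1 / real (n i)) * (\<Sum>j<n i. fij i j x)) has_derivative
        (\<lambda>h. (1 / real (n i)) * (\<Sum>j<n i. gr i j x \<bullet> h))) (at x)"
    by (intro has_derivative_mult_right has_derivative_sum) (use diff i x in auto)
  moreover have "(\<lambda>h. (1 / real (n i)) * (\<Sum>j<n i. gr i j x \<bullet> h)) = (\<lambda>h. g i x \<bullet> h)"
    by (rule ext) (simp add: g_def local_grad_def inner_sum_left)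
  ultimately show ?thesis unfolding eq by simp
qed

lemma F_deriv: assumes x: "x \<in> U" shows "(F has_derivative (\<lambda>h. gF x \<bullet> h)) (at x)"
proof -
  have eq: "F = (\<lambda>x. (1 / real m) * (\<Sum>i<m. local_obj fij n i x))"
    by (rule ext) (simp add: global_obj_def)
  have "((\<lambda>x. (1 / real m) * (\<Sum>i<m. local_obj fij n i x)) has_derivative
        (\<lambda>h. (1 / real m) * (\<Sum>i<m. g i x \<bullet> h))) (at x)"
    by (intro has_derivative_mult_right has_derivative_sum) (use local_deriv x in auto)
  moreover have "(\<lambda>h. (1 / real m) * (\<Sum>i<m. g i x \<bullet> h)) = (\<lambda>h. gF x \<bullet> h)"
    by (rule ext) (simp add: gF_def avgv_def inner_sum_left)
  ultimately show ?thesis unfolding eq by simp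
qed

lemma gF_lip: assumes "x \<in> U" "y \<in> U" shows "norm (gF x - gF y) \<le> Lp * norm (x - y)"
proof -
  have "gF x - gF y = avgv m (\<lambda>i. g i x - g i y)" unfolding gF_def avgv_diff ..
  also have "norm \<dots> \<le> Lp * norm (x - y)"
    by (rule norm_avgv_le[OF m_pos]) (use g_lip assms in auto)
  finally show ?thesis .
qed

lemma F_taylor: assumes x: "x \<in> \<Omega>" and y: "y \<in> \<Omega>"
  shows "\<bar>F y - F x - gF x \<bullet> (y - x)\<bar> \<le> Lp * (norm (y - x))\<^sup>2"
proof -
  define p where "p \<tau> = x + \<tau> *\<^sub>R (y - x)" for \<tau> :: real
  have pin: "p \<tau> \<in> \<Omega>" if "0 \<le> \<tau>" "\<tau> \<le> 1" for \<tau>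
  proof -
    have "(1 - \<tau>) *\<^sub>R x + \<tau> *\<^sub>R y \<in> \<Omega>" using Omega(2) x y that by (simp add: convex_alt)
    moreover have "(1 - \<tau>) *\<^sub>R x + \<tau> *\<^sub>R y = p \<tau>" unfolding p_def by (simp add: algebra_simps)
    ultimately show ?thesis by simp
  qed
  have der: "((\<lambda>\<tau>. F (p \<tau>)) has_derivative (\<lambda>h. gF (p \<tau>) \<bullet> (h *\<^sub>R (y - x)))) (at \<tau> within {0..1})"
    if "0 \<le> \<tau>" "\<tau> \<le> 1" for \<tau>
  proof (rule has_derivative_in_compose[where f = p and g = F])
    show "(p has_derivative (\<lambda>h. h *\<^sub>R (y - x))) (at \<tau> within {0..1})"
      unfolding p_def by (auto intro!: derivative_eq_intros)
    have "p \<tau> \<in> U" using pin that nbhd(2) by blast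
    from F_deriv[OF this] show "(F has_derivative (\<lambda>h. gF (p \<tau>) \<bullet> h)) (at (p \<tau>) within p ` {0..1})"
      by (rule has_derivative_subset) simp
  qed
  obtain \<xi> where \<xi>: "\<xi> \<in> {0<..<1}" and mv: "F (p 1) - F (p 0) = gF (p \<xi>) \<bullet> (1 *\<^sub>R (y - x))"
    using mvt_simple[of 0 1 "\<lambda>\<tau>. F (p \<tau>)" "\<lambda>\<tau> h. gF (p \<tau>) \<bullet> (h *\<^sub>R (y - x))"] der by auto
  have p01: "p 1 = y" "p 0 = x" unfolding p_def by auto
  have "F y - F x - gF x \<bullet> (y - x) = (gF (p \<xi>) - gF x) \<bullet> (y - x)"
    using mv p01 by (simp add: inner_diff_left)
  hence "\<bar>F y - F x - gF x \<bullet> (y - x)\<bar> \<le> norm (gF (p \<xi>) - gF x) * norm (y - x)"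
    using Cauchy_Schwarz_ineq2 by simp
  also have "norm (gF (p \<xi>) - gF x) \<le> Lp * norm (p \<xi> - x)"
    using gF_lip pin[of \<xi>] \<xi> x nbhd(2) by auto
  also have "norm (p \<xi> - x) = \<xi> * norm (y - x)" unfolding p_def using \<xi> by simp
  finally have "\<bar>F y - F x - gF x \<bullet> (y - x)\<bar> \<le> Lp * (\<xi> * norm (y - x)) * norm (y - x)"
    by (simp add: mult_right_mono)
  also have "\<dots> \<le> Lp * (1 * norm (y - x)) * norm (y - x)"
    using \<xi> Lp_nonneg by (intro mult_right_mono mult_left_mono) auto
  finally show ?thesis by (simp add: power2_eq_square mult.assoc)
qed

lemma F_convex: assumes "x \<in> \<Omega>" "y \<in> \<Omega>" "0 \<le> \<tau>" "\<tau> \<le> 1"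
  shows "F ((1 - \<tau>) *\<^sub>R x + \<tau> *\<^sub>R y) \<le> (1 - \<tau>) * F x + \<tau> * F y"
proof -
  define Z where "Z = (\<Sum>i<m. local_obj fij n i ((1 - \<tau>) *\<^sub>R x + \<tau> *\<^sub>R y))"
  define A where "A = (\<Sum>i<m. local_obj fij n i x)"
  define B where "B = (\<Sum>i<m. local_obj fij n i y)"
  have "Z \<le> (\<Sum>i<m. (1 - \<tau>) * local_obj fij n i x + \<tau> * local_obj fij n i y)"
    unfolding Z_def by (intro sum_mono convex_onD[of \<Omega>]) (use cvx assms in auto)
  also have "\<dots> = (1 - \<tau>) * A + \<tau> * B" unfolding A_def B_def by (simp add: sum.distrib sum_distrib_left)
  finally have "(1 / real m) * Z \<le> (1 / real m) * ((1 - \<tau>) * A + \<tau> * B)" by (intro mult_left_mono) auto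
  also have "\<dots> = (1 - \<tau>) * ((1 / real m) * A) + \<tau> * ((1 / real m) * B)" by (simp add: algebra_simps add_divide_distrib[symmetric])
  finally show ?thesis unfolding global_obj_def Z_def A_def B_def .
qed

lemma F_tangent: assumes x: "x \<in> \<Omega>" shows "gF x \<bullet> (xstar - x) \<le> F xstar - F x"
proof (rule field_le_epsilon)
  fix e :: real assume e: "0 < e"
  define v where "v = xstar - x"
  define N where "N = (norm v)\<^sup>2"
  define \<tau> where "\<tau> = min 1 (e / (Lp * N + 1))"
  have N0: "0 \<le> N" unfolding N_def by simp
  have LN: "0 \<le> Lp * N" using Lp_nonneg N0 by simp
  have t0: "0 < \<tau>" unfolding \<tau>_def using e LN by simp
  have t1: "\<tau> \<le> 1" unfolding \<tau>_def by simp
  define z where "z = (1 - \<tau>) *\<^sub>R x + \<tau> *\<^sub>R xstar"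
  have zv: "z - x = \<tau> *\<^sub>R v" unfolding z_def v_def by (simp add: algebra_simps)
  have zin: "z \<in> \<Omega>" using Omega(2) x opt(1) t0 t1 unfolding z_def by (simp add: convex_alt)
  have up: "F z \<le> (1 - \<tau>) * F x + \<tau> * F xstar"
    unfolding z_def by (rule F_convex[OF x opt(1)]) (use t0 t1 in auto)
  have low: "F z - F x - gF x \<bullet> (z - x) \<ge> - (Lp * (norm (z - x))\<^sup>2)"
    using F_taylor[OF x zin] by linarith
  have nn: "norm (z - x) = \<tau> * norm v" unfolding zv using t0 by simp
  have nz: "(norm (z - x))\<^sup>2 = \<tau>\<^sup>2 * N" unfolding nn N_def by (simp add: power_mult_distrib)
  have i1: "gF x \<bullet> (z - x) = \<tau> * (gF x \<bullet> v)" unfolding zv by simp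
  have low2: "F x + \<tau> * (gF x \<bullet> v) - Lp * (\<tau>\<^sup>2 * N) \<le> F z" using low unfolding i1 nz by linarith
  have up2: "F z \<le> F x - \<tau> * F x + \<tau> * F xstar" using up by (simp add: algebra_simps)
  have "\<tau> * (gF x \<bullet> v) \<le> \<tau> * F xstar - \<tau> * F x + Lp * (\<tau>\<^sup>2 * N)" using low2 up2 by linarith
  hence "\<tau> * (gF x \<bullet> v) \<le> \<tau> * (F xstar - F x) + Lp * (\<tau>\<^sup>2 * N)" by (simp add: algebra_simps)
  hence "\<tau> * (gF x \<bullet> v) \<le> \<tau> * ((F xstar - F x) + \<tau> * (Lp * N))"
    by (simp add: algebra_simps power2_eq_square)
  hence main: "gF x \<bullet> v \<le> (F xstar - F x) + \<tau> * (Lp * N)" using t0 by simp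
  have "\<tau> * (Lp * N) \<le> e"
  proof -
    have "\<tau> \<le> e / (Lp * N + 1)" unfolding \<tau>_def by simp
    hence "\<tau> * (Lp * N + 1) \<le> e" using LN by (simp add: field_simps)
    moreover have "\<tau> * (Lp * N) \<le> \<tau> * (Lp * N + 1)" using t0 by simp
    ultimately show ?thesis by linarith
  qed
  thus "gF x \<bullet> (xstar - x) \<le> F xstar - F x + e" using main unfolding v_def by linarith
qed

end

context dfw begin

definition h where "h \<omega> t = F (xb \<omega> t) - F xstar"

lemma h_nonneg: "0 \<le> h \<omega> t" unfolding h_def using opt(2) xb_in by auto

lemma Ke_nonneg: assumes v: "valid \<omega>" shows "0 \<le> Ke"
proof -
  have "norm (D \<omega> 0 0 - gF (xb \<omega> 0)) \<le> Ke" using track[OF v, of 0 0] m_pos by simp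
  thus ?thesis by (meson norm_ge_zero order_trans)
qed

definition cF where "cF = 4 * rho * Ke + 4 * Lp * rho\<^sup>2"

lemma per_agent: assumes v: "valid \<omega>" and i: "i < m"
  shows "(u \<omega> t i - xb \<omega> t) \<bullet> gF (xb \<omega> t) \<le> F xstar - F (xb \<omega> t) + 2 * rho * (Ke / (real t + 1))"
proof -
  define x where "x = xb \<omega> t"
  define g0 where "g0 = gF x"
  define d where "d = D \<omega> t i"
  define uu where "uu = u \<omega> t i"
  define \<epsilon> where "\<epsilon> = Ke / (real t + 1)"
  have xin: "x \<in> \<Omega>" unfolding x_def by (rule xb_in)
  have uin: "uu \<in> \<Omega>" unfolding uu_def by (rule u_in)
  have eps: "norm (d - g0) \<le> \<epsilon>" unfolding d_def g0_def x_def \<epsilon>_def by (rule track[OF v i])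
  have eps0: "0 \<le> \<epsilon>" using eps norm_ge_zero[of "d - g0"] by linarith
  have lm: "uu \<bullet> d \<le> xstar \<bullet> d" unfolding uu_def u_def d_def using lmo opt(1) by blast
  have c1: "(g0 - d) \<bullet> (uu - x) \<le> \<epsilon> * rho"
  proof -
    have "(g0 - d) \<bullet> (uu - x) \<le> norm (g0 - d) * norm (uu - x)" by (rule norm_cauchy_schwarz)
    also have "\<dots> \<le> \<epsilon> * rho"
      using eps eps0 rho_facts(2)[OF uin xin] by (intro mult_mono) (auto simp: norm_minus_commute)
    finally show ?thesis .
  qed
  have c2: "(d - g0) \<bullet> (xstar - x) \<le> \<epsilon> * rho"
  proof -
    have "(d - g0) \<bullet> (xstar - x) \<le> norm (d - g0) * norm (xstar - x)" by (rule norm_cauchy_schwarz)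
    also have "\<dots> \<le> \<epsilon> * rho"
      using eps eps0 rho_facts(2)[OF opt(1) xin] by (intro mult_mono) auto
    finally show ?thesis .
  qed
  have tg: "g0 \<bullet> (xstar - x) \<le> F xstar - F x" unfolding g0_def by (rule F_tangent[OF xin])
  have e1: "(uu - x) \<bullet> g0 = d \<bullet> (uu - x) + (g0 - d) \<bullet> (uu - x)"
    by (simp add: inner_diff_left inner_diff_right inner_commute)
  have e2: "d \<bullet> (uu - x) \<le> d \<bullet> (xstar - x)"
    using lm by (simp add: inner_diff_right inner_commute)
  have e3: "d \<bullet> (xstar - x) = g0 \<bullet> (xstar - x) + (d - g0) \<bullet> (xstar - x)"
    by (simp add: inner_diff_left)
  have "(uu - x) \<bullet> g0 \<le> F xstar - F x + 2 * rho * \<epsilon>"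
    using e1 e2 e3 c1 c2 tg by (simp add: algebra_simps)
  thus ?thesis unfolding x_def g0_def uu_def \<epsilon>_def .
qed

lemma fw_step: assumes v: "valid \<omega>"
  shows "h \<omega> (Suc t) \<le> (1 - 2 / (real (Suc t) + 1)) * h \<omega> t + cF / (real t + 1)\<^sup>2"
proof -
  define \<gamma> where "\<gamma> = gam t"
  define x where "x = xb \<omega> t"
  define x' where "x' = xb \<omega> (Suc t)"
  define ub where "ub = avgv m (u \<omega> t)"
  define \<epsilon> where "\<epsilon> = Ke / (real t + 1)"
  have g: "0 \<le> \<gamma>" "\<gamma> \<le> 1" "\<gamma> \<le> 2 / (real t + 1)" unfolding \<gamma>_def using gam_facts by auto
  have xin: "x \<in> \<Omega>" "x' \<in> \<Omega>" unfolding x_def x'_def by (rule xb_in)+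
  have ubin: "ub \<in> \<Omega>" unfolding ub_def by (rule avg_in) (use u_in in auto)
  have dx: "x' - x = \<gamma> *\<^sub>R (ub - x)" unfolding x'_def x_def xb_step \<gamma>_def ub_def
    by (simp add: algebra_simps)
  have T: "F x' - F x - gF x \<bullet> (x' - x) \<le> Lp * (norm (x' - x))\<^sup>2"
    using F_taylor[OF xin(1) xin(2)] by linarith
  have i1: "gF x \<bullet> (x' - x) = \<gamma> * ((ub - x) \<bullet> gF x)" unfolding dx by (simp add: inner_commute)
  have n1: "(norm (x' - x))\<^sup>2 \<le> \<gamma>\<^sup>2 * rho\<^sup>2"
  proof -
    have "norm (x' - x) = \<gamma> * norm (ub - x)" unfolding dx using g by simp
    also have "\<dots> \<le> \<gamma> * rho" using rho_facts(2)[OF ubin xin(1)] g by (intro mult_left_mono) auto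
    finally have "norm (x' - x) \<le> \<gamma> * rho" .
    hence "(norm (x' - x))\<^sup>2 \<le> (\<gamma> * rho)\<^sup>2" by (intro power_mono) auto
    thus ?thesis by (simp add: power_mult_distrib)
  qed
  have ubx: "ub - x = avgv m (\<lambda>i. u \<omega> t i - x)"
    unfolding ub_def avgv_diff avgv_const[OF m_pos] ..
  have inn0: "avgv m (\<lambda>i. u \<omega> t i - x) \<bullet> gF x \<le> F xstar - F x + 2 * rho * \<epsilon>"
    unfolding \<epsilon>_def x_def
    by (rule inner_avgv_le[OF m_pos]) (use per_agent[OF v] in auto)
  have inn: "(ub - x) \<bullet> gF x \<le> F xstar - F x + 2 * rho * \<epsilon>"
    using inn0 unfolding ubx .
  have "h \<omega> (Suc t) = F x' - F xstar" unfolding h_def x'_def ..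
  also have "\<dots> \<le> F x + \<gamma> * ((ub - x) \<bullet> gF x) + Lp * (\<gamma>\<^sup>2 * rho\<^sup>2) - F xstar"
  proof -
    have "Lp * (norm (x' - x))\<^sup>2 \<le> Lp * (\<gamma>\<^sup>2 * rho\<^sup>2)" using n1 Lp_nonneg by (rule mult_left_mono)
    thus ?thesis using T i1 by linarith
  qed
  also have "\<dots> \<le> F x + \<gamma> * (F xstar - F x + 2 * rho * \<epsilon>) + Lp * (\<gamma>\<^sup>2 * rho\<^sup>2) - F xstar"
    using inn g by (simp add: mult_left_mono)
  also have "\<dots> = (1 - \<gamma>) * h \<omega> t + 2 * rho * (\<gamma> * \<epsilon>) + Lp * rho\<^sup>2 * \<gamma>\<^sup>2"
    unfolding h_def x_def by (simp add: algebra_simps)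
  also have "\<dots> \<le> (1 - \<gamma>) * h \<omega> t + 2 * rho * (2 * Ke / (real t + 1)\<^sup>2) + Lp * rho\<^sup>2 * (4 / (real t + 1)\<^sup>2)"
  proof -
    have Ke0: "0 \<le> Ke" by (rule Ke_nonneg[OF v])
    have "\<gamma> * \<epsilon> \<le> (2 / (real t + 1)) * (Ke / (real t + 1))"
      unfolding \<epsilon>_def using g Ke0 by (intro mult_mono) auto
    also have "\<dots> = 2 * Ke / (real t + 1)\<^sup>2" by (simp add: power2_eq_square)
    finally have a: "2 * rho * (\<gamma> * \<epsilon>) \<le> 2 * rho * (2 * Ke / (real t + 1)\<^sup>2)"
      using rho_facts(1) by (intro mult_left_mono) auto
    have "\<gamma>\<^sup>2 \<le> (2 / (real t + 1))\<^sup>2" using g by (intro power_mono) auto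
    also have "\<dots> = 4 / (real t + 1)\<^sup>2" by (simp add: power_divide)
    finally have b: "Lp * rho\<^sup>2 * \<gamma>\<^sup>2 \<le> Lp * rho\<^sup>2 * (4 / (real t + 1)\<^sup>2)"
      using Lp_nonneg by (intro mult_left_mono) auto
    show ?thesis using a b by linarith
  qed
  also have "\<dots> = (1 - 2 / (real (Suc t) + 1)) * h \<omega> t + cF / (real t + 1)\<^sup>2"
  proof -
    have r: "2 * rho * (2 * Ke / (real t + 1)\<^sup>2) + Lp * rho\<^sup>2 * (4 / (real t + 1)\<^sup>2) = cF / (real t + 1)\<^sup>2"
      unfolding cF_def add_divide_distrib by (simp add: mult.commute mult.left_commute)
    show ?thesis unfolding \<gamma>_def gam_def using r by linarith
  qed
  finally show ?thesis .
qed

lemma Kh_ex: "\<exists>K. \<forall>\<omega> t. valid \<omega> \<longrightarrow> h \<omega> t \<le> K / (real t + 1)"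
proof (cases "\<exists>\<omega>. valid \<omega>")
  case False thus ?thesis by auto
next
  case True
  then obtain \<omega>0 where "valid \<omega>0" by blast
  have c: "0 \<le> cF" unfolding cF_def using Ke_nonneg[OF \<open>valid \<omega>0\<close>] rho_facts(1) Lp_nonneg by simp
  obtain K where K: "\<forall>hh::nat \<Rightarrow> real. hh 0 \<le> F (avgv m x1) - F xstar \<longrightarrow>
     (\<forall>t. hh (Suc t) \<le> (1 - 2 / (real (Suc t) + 1)) * hh t + cF / (real t + 1)\<^sup>2) \<longrightarrow>
     (\<forall>t. hh t \<le> K / (real t + 1))"
    using rec_fw[OF c] by blast
  have "h \<omega> t \<le> K / (real t + 1)" if "valid \<omega>" for \<omega> t
    using K[rule_format, of "h \<omega>"] fw_step[OF that] by (simp add: h_def xb_def st0)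
  thus ?thesis by blast
qed

definition Kh where "Kh = (SOME K. \<forall>\<omega> t. valid \<omega> \<longrightarrow> h \<omega> t \<le> K / (real t + 1))"
lemma Kh: "valid \<omega> \<Longrightarrow> h \<omega> t \<le> Kh / (real t + 1)"
  using someI_ex[OF Kh_ex] unfolding Kh_def[symmetric] by blast

lemma main_bound: "valid \<omega> \<Longrightarrow> \<bar>F (xb \<omega> t) - F xstar\<bar> \<le> Kh / (real t + 1)"
  using Kh[of \<omega> t] h_nonneg[of \<omega> t] unfolding h_def by simp

end

context dfw begin

lemma agree:
  assumes ag: "\<forall>t i l. t < k \<and> i < m \<and> l < s t \<longrightarrow> \<omega> (t, i, l) = \<omega>' (t, i, l)"
  shows "t < k \<Longrightarrow> \<forall>i<m. X \<omega> t i = X \<omega>' t i \<and> V \<omega> t i = V \<omega>' t i \<and> D \<omega> t i = D \<omega>' t i"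
proof (induction t)
  case 0 thus ?case by (simp add: st0)
next
  case (Suc t)
  hence IH: "\<forall>i<m. X \<omega> t i = X \<omega>' t i \<and> V \<omega> t i = V \<omega>' t i \<and> D \<omega> t i = D \<omega>' t i" by simp
  have mx: "mixv m W (X \<omega> t) i = mixv m W (X \<omega>' t) i" for i
    unfolding mixv_def by (rule sum.cong) (use IH in auto)
  have Xs: "X \<omega> (Suc t) i = X \<omega>' (Suc t) i" if "i < m" for i
    unfolding st_step(1) u_def using mx IH that by simp
  have Vs: "V \<omega> (Suc t) i = V \<omega>' (Suc t) i" if i: "i < m" for i
  proof -
    have "(\<Sum>l<s (Suc t). gr i (\<omega> (Suc t, i, l)) (X \<omega> (Suc t) i) - gr i (\<omega> (Suc t, i, l)) (X \<omega> t i))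
        = (\<Sum>l<s (Suc t). gr i (\<omega>' (Suc t, i, l)) (X \<omega>' (Suc t) i) - gr i (\<omega>' (Suc t, i, l)) (X \<omega>' t i))"
      by (rule sum.cong) (use ag Suc.prems i Xs IH in auto)
    thus ?thesis unfolding st_step(2) using Xs[OF i] IH i by simp
  qed
  have Ds: "D \<omega> (Suc t) i = D \<omega>' (Suc t) i" if "i < m" for i
    unfolding st_step(3) mixv_def by (rule sum.cong) (use IH Vs in auto)
  show ?case using Xs Vs Ds by blast
qed

lemma support:
  assumes "\<omega> \<in> set_pmf (sample_pmf m n s k)" "t < k" "i < m" "l < s t"
  shows "\<omega> (t, i, l) < n i"
proof -
  define A where "A = {(t, i, l). t < k \<and> i < m \<and> l < s t}"
  have "A = Sigma {..<k} (\<lambda>t. {..<m} \<times> {..<s t})" unfolding A_def by auto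
  hence finA: "finite A" by simp
  have "\<omega> \<in> PiE_dflt A 0 (set_pmf \<circ> (\<lambda>(t, i, l). pmf_of_set {..<n i}))"
    using assms(1) unfolding sample_pmf_def A_def[symmetric] set_Pi_pmf[OF finA] .
  moreover have "(t, i, l) \<in> A" unfolding A_def using assms by auto
  ultimately have "\<omega> (t, i, l) \<in> set_pmf (pmf_of_set {..<n i})" unfolding PiE_dflt_def by auto
  moreover have "{..<n i} \<noteq> {}"
  proof -
    have "n i \<ge> 1" using n_pos assms(3) by blast
    hence "0 \<in> {..<n i}" by simp
    thus ?thesis by blast
  qed
  ultimately show ?thesis by simp
qed

lemma sample_bound:
  assumes k: "k \<ge> 1" and w: "\<omega> \<in> set_pmf (sample_pmf m n s k)"
  shows "\<bar>F (dstofw_xbar m W n gr lmo (\<lambda>k. 2 / (real k + 1)) q s \<omega> x1 k) - F xstar\<bar> \<le> Kh / real k"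
proof -
  define \<omega>' where "\<omega>' = (\<lambda>p. if \<omega> p < n (fst (snd p)) then \<omega> p else 0)"
  have v: "valid \<omega>'" unfolding valid_def \<omega>'_def using n_pos by auto
  have ag: "\<forall>t i l. t < k \<and> i < m \<and> l < s t \<longrightarrow> \<omega> (t, i, l) = \<omega>' (t, i, l)"
    unfolding \<omega>'_def using support[OF w] by auto
  have eq: "dstofw_xbar m W n gr lmo (\<lambda>k. 2 / (real k + 1)) q s \<omega> x1 k = xb \<omega> (k - 1)"
    unfolding dstofw_xbar_def dstofw_x_def xb_def avgv_def X_def st_def ..
  have "xb \<omega> (k - 1) = xb \<omega>' (k - 1)"
    unfolding xb_def avgv_def using agree[OF ag, of "k - 1"] k by simp
  hence "\<bar>F (dstofw_xbar m W n gr lmo (\<lambda>k. 2 / (real k + 1)) q s \<omega> x1 k) - F xstar\<bar> \<le> Kh / (real (k - 1) + 1)"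
    using main_bound[OF v, of "k - 1"] eq by simp
  also have "real (k - 1) + 1 = real k" using k by simp
  finally show ?thesis .
qed

end

theorem theorem2:
  fixes \<Omega> U :: "'a::euclidean_space set"
    and m :: nat and n :: "nat \<Rightarrow> nat"
    and fij :: "nat \<Rightarrow> nat \<Rightarrow> 'a \<Rightarrow> real" and gr :: "nat \<Rightarrow> nat \<Rightarrow> 'a \<Rightarrow> 'a"
    and L G C :: real
    and E :: "nat \<Rightarrow> nat \<Rightarrow> bool" and W :: "nat \<Rightarrow> nat \<Rightarrow> real"
    and q :: nat and s :: "nat \<Rightarrow> nat"
    and lmo :: "nat \<Rightarrow> nat \<Rightarrow> 'a \<Rightarrow> 'a" and x1 :: "nat \<Rightarrow> 'a" and xstar :: 'a
  assumes Omega: "\<Omega> \<noteq> {}" "convex \<Omega>" "compact \<Omega>"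
    and m_pos: "m \<ge> 1" and n_pos: "\<forall>i<m. n i \<ge> 1"
    and nbhd: "open U" "\<Omega> \<subseteq> U"
    and diff: "\<forall>i<m. \<forall>j<n i. \<forall>x\<in>U. (fij i j has_derivative (\<lambda>h. gr i j x \<bullet> h)) (at x)"
    and smooth: "\<forall>i<m. \<forall>j<n i. \<forall>x\<in>U. \<forall>y\<in>U. norm (gr i j x - gr i j y) \<le> L * norm (x - y)"
    and lip: "\<forall>i<m. G-lipschitz_on \<Omega> (local_obj fij n i)"
    and bnd: "\<forall>i<m. \<forall>x\<in>\<Omega>. norm (local_grad gr n i x) \<le> C"
    and cvx: "\<forall>i<m. convex_on \<Omega> (local_obj fij n i)"
    and graph: "connected_graph m E"
    and W: "mixing_matrix m E W"
    and q_pos: "q \<ge> 1"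
    and s_pos: "\<forall>k\<ge>1. s k \<ge> 1"
    and rule: "sampling_rule1 q (\<lambda>k. 2 / (real k + 1)) s"
    and lmo: "\<forall>k i d. lmo k i d \<in> \<Omega> \<and> (\<forall>u\<in>\<Omega>. lmo k i d \<bullet> d \<le> u \<bullet> d)"
    and init: "\<forall>i<m. x1 i \<in> \<Omega>"
    and opt: "xstar \<in> \<Omega>" "\<forall>x\<in>\<Omega>. global_obj m fij n xstar \<le> global_obj m fij n x"
  shows "(\<lambda>k. measure_pmf.expectation (sample_pmf m n s k)
              (\<lambda>\<omega>. global_obj m fij n
                     (dstofw_xbar m W n gr lmo (\<lambda>k. 2 / (real k + 1)) q s \<omega> x1 k))
            - global_obj m fij n xstar)
         \<in> O(\<lambda>k. 1 / real k)"
proof -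
  interpret D: dfw \<Omega> U m n fij gr L E W q s lmo x1 xstar
    by (rule dfw.intro) (use Omega m_pos n_pos nbhd diff smooth cvx W q_pos lmo init opt in auto)
  define P where "P k = sample_pmf m n s k" for k
  define f where "f k \<omega> = global_obj m fij n (dstofw_xbar m W n gr lmo (\<lambda>k. 2 / (real k + 1)) q s \<omega> x1 k)" for k \<omega>
  have bound: "norm (measure_pmf.expectation (P k) (f k) - global_obj m fij n xstar) \<le> D.Kh * norm (1 / real k)"
    if k: "k \<ge> 1" for k
  proof -
    define c where "c = global_obj m fij n xstar"
    define B where "B = D.Kh / real k"
    have pt: "\<bar>f k \<omega> - c\<bar> \<le> B" if "\<omega> \<in> set_pmf (P k)" for \<omega>
      using D.sample_bound[OF k that[unfolded P_def]] unfolding f_def c_def B_def .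
    have A: "finite {(t, i, l). t < k \<and> i < m \<and> l < s t}"
    proof -
      have "{(t, i, l). t < k \<and> i < m \<and> l < s t} = Sigma {..<k} (\<lambda>t. {..<m} \<times> {..<s t})" by auto
      thus ?thesis by simp
    qed
    have fin: "finite (set_pmf (P k))"
      unfolding P_def sample_pmf_def set_Pi_pmf[OF A]
    proof (rule finite_PiE_dflt[OF A])
      fix x assume "x \<in> {(t, i, l). t < k \<and> i < m \<and> l < s t}"
      then obtain t i l where x: "x = (t, i, l)" "i < m" by auto
      have "n i \<ge> 1" using n_pos x(2) by blast
      hence "0 \<in> {..<n i}" by simp
      hence "{..<n i} \<noteq> {}" by blast
      hence "set_pmf (pmf_of_set {..<n i}) = {..<n i}" by simp
      thus "finite ((set_pmf \<circ> (\<lambda>(t, i, l). pmf_of_set {..<n i})) x)" using x by simp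
    qed
    have int: "integrable (measure_pmf (P k)) (f k)" by (rule integrable_measure_pmf_finite[OF fin])
    have pu: "\<forall>\<omega>\<in>set_pmf (P k). f k \<omega> \<le> c + B"
    proof
      fix \<omega> assume "\<omega> \<in> set_pmf (P k)"
      from pt[OF this] show "f k \<omega> \<le> c + B" by linarith
    qed
    have pl: "\<forall>\<omega>\<in>set_pmf (P k). c - B \<le> f k \<omega>"
    proof
      fix \<omega> assume "\<omega> \<in> set_pmf (P k)"
      from pt[OF this] show "c - B \<le> f k \<omega>" by linarith
    qed
    have up: "measure_pmf.expectation (P k) (f k) \<le> c + B"
      by (rule measure_pmf.integral_le_const[OF int]) (simp add: AE_measure_pmf_iff pu)
    have lo: "c - B \<le> measure_pmf.expectation (P k) (f k)"
      by (rule measure_pmf.integral_ge_const[OF int]) (simp add: AE_measure_pmf_iff pl)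
    have "\<bar>measure_pmf.expectation (P k) (f k) - c\<bar> \<le> B" using up lo by linarith
    thus ?thesis unfolding B_def c_def using k by simp
  qed
  have "(\<lambda>k. measure_pmf.expectation (P k) (f k) - global_obj m fij n xstar) \<in> O(\<lambda>k. 1 / real k)"
  proof (rule bigoI)
    show "\<forall>\<^sub>F k in at_top. norm (measure_pmf.expectation (P k) (f k) - global_obj m fij n xstar) \<le> D.Kh * norm (1 / real k)"
      using bound by (auto simp: eventually_at_top_linorder intro!: exI[of _ 1])
  qed
  thus ?thesis unfolding P_def f_def .
qed

end
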